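(* Let $(E,d)$ and $E'$ be Polish spaces, $F:E\times E'\to E$ a measurable map, and $(\zeta_t)_{t\in\mathbb{Z}}$ an $E'$-valued process adapted to a filtration $(\mathcal{F}_t)_{t\in\mathbb{Z}}$. Set $f_t=F(\cdot,\zeta_t)$ and $f_s^t=f_t\circ f_{t-1}\circ\cdots\circ f_s$ for $s\le t$ (with $f_t^{t-1}(x)=x$). Let $p\ge 1$, $L>0$, $\kappa\in(0,1)$ and an integer $m\ge1$ be such that: (A1) there exists $x_0\in E$ with $\sup_{t\in\mathbb{Z}}\mathbb{E}[d^p(f_t(x_0),x_0)]<\infty$; (A2) for every $t\in\mathbb{Z}$, almost surely, for all $(x,y)\in E^2$ simultaneously, $$\mathbb{E}[d^p(f_t(x),f_t(y))\mid\mathcal{F}_{t-1}]\le L^p d^p(x,y)\quad\text{and}\quad \mathbb{E}[d^p(f_t^{t+m-1}(x),f_t^{t+m-1}(y))\mid\mathcal{F}_{t-1}]\le \kappa^p d^p(x,y).$$ Then: 1. For every $(x,t)\in E\times\mathbb{Z}$ there is an $E$-valued random variable $X_t(x)$ with $\sup_{t}\|d(X_t(x),x_0)\|_p<\infty$ and $\sup_t\|d(f_{t-s}^t(x),X_t(x))\|_p=O(\kappa^{s/m})$ as $s\to\infty$; moreover $f_{t-s}^t(x)\to X_t(x)$ almost surely as $s\to\infty$. 2. For $x\ne y$, $\mathbb{P}(X_t(x)\neq X_t(y))=0$; one sets $X_t=X_t(x)$. 3. If $(\zeta_t)$ is stationary, the process $((X_t,\zeta_t))_{t\in\mathbb{Z}}$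 is stationary, and it is ergodic if $(\zeta_t)$ is stationary and ergodic. 4. If $(Y_t)_{t\in\mathbb{Z}}$ is non-anticipative (i.e. $Y_t$ is $\mathcal{F}_t$-measurable), satisfies $Y_t=f_t(Y_{t-1})$ for all $t$ and $\sup_j\mathbb{E}[d^p(Y_j,x_0)]<\infty$, then $Y_t=X_t$ a.s. for all $t$.
   Context: $\|X\|_p=(\mathbb{E}|X|^p)^{1/p}$. The conditional expectations in (A2) are understood through a regular version of the conditional distribution of $(\zeta_t,\dots,\zeta_{t+m-1})$ given $\mathcal{F}_{t-1}$, so that the inequalities hold for all $(x,y)$ outside a single null set. *)

theory Defs
  imports "HOL-Probability.Probability"
begin

fun fiter :: "('a \<Rightarrow> 'b \<Rightarrow> 'a) \<Rightarrow> (nat \<Rightarrow> 'b) \<Rightarrow> nat \<Rightarrow> 'a \<Rightarrow> 'a" where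
  "fiter F z 0 x = x"
| "fiter F z (Suc n) x = F (fiter F z n x) (z n)"

definition reg_cond_distr ::
  "'w measure \<Rightarrow> 'w measure \<Rightarrow> 'v measure \<Rightarrow> ('w \<Rightarrow> 'v) \<Rightarrow> ('w \<Rightarrow> 'v measure) \<Rightarrow> bool" where
  "reg_cond_distr M G N Y K \<longleftrightarrow>
     K \<in> measurable G (prob_algebra N) \<and>
     (\<forall>A\<in>sets G. \<forall>B\<in>sets N.
        measure M ({\<omega>\<in>space M. Y \<omega> \<in> B} \<inter> A) = (LINT \<omega>:A|M. measure (K \<omega>) B))"

definition path_space :: "(int \<Rightarrow> 'c::topological_space) measure" where
  "path_space = PiM UNIV (\<lambda>_. borel)"

definition proc_law :: "'w measure \<Rightarrow> (int \<Rightarrow> 'w \<Rightarrow> 'c::topological_space) \<Rightarrow> (int \<Rightarrow> 'c) measure" where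
  "proc_law M Z = distr M path_space (\<lambda>\<omega> t. Z t \<omega>)"

definition stationary :: "'w measure \<Rightarrow> (int \<Rightarrow> 'w \<Rightarrow> 'c::topological_space) \<Rightarrow> bool" where
  "stationary M Z \<longleftrightarrow> (\<forall>k. proc_law M (\<lambda>t. Z (t + k)) = proc_law M Z)"

definition ergodic :: "'w measure \<Rightarrow> (int \<Rightarrow> 'w \<Rightarrow> 'c::topological_space) \<Rightarrow> bool" where
  "ergodic M Z \<longleftrightarrow>
     (\<forall>A\<in>sets path_space.
        (\<lambda>w t. w (t + 1)) -` A \<inter> space path_space = A \<longrightarrow>
        measure (proc_law M Z) A = 0 \<or> measure (proc_law M Z) A = 1)"

end

theory Submission
  imports Defs
begin
lemma disint:
  fixes h :: "'q \<times> 'v \<Rightarrow> ennreal"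
  assumes M: "prob_space M" and G: "subalgebra M G"
    and K: "reg_cond_distr M G N Y K" and Y: "Y \<in> M \<rightarrow>\<^sub>M N"
    and W: "W \<in> G \<rightarrow>\<^sub>M Q" and h: "h \<in> borel_measurable (Q \<Otimes>\<^sub>M N)"
  shows "(\<integral>\<^sup>+\<omega>. h (W \<omega>, Y \<omega>) \<partial>M) = (\<integral>\<^sup>+\<omega>. (\<integral>\<^sup>+z. h (W \<omega>, z) \<partial>K \<omega>) \<partial>M)"
proof -
  interpret prob_space M by fact
  have KG: "K \<in> G \<rightarrow>\<^sub>M prob_algebra N" and Keq: "\<And>A B. A \<in> sets G \<Longrightarrow> B \<in> sets N \<Longrightarrow>
     measure M ({\<omega>\<in>space M. Y \<omega> \<in> B} \<inter> A) = (LINT \<omega>:A|M. measure (K \<omega>) B)"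
    using K unfolding reg_cond_distr_def by auto
  have KM: "K \<in> M \<rightarrow>\<^sub>M prob_algebra N" using measurable_from_subalg[OF G KG] .
  have KMs: "K \<in> M \<rightarrow>\<^sub>M subprob_algebra N" using measurable_prob_algebraD[OF KM] .
  have WM: "W \<in> M \<rightarrow>\<^sub>M Q" using measurable_from_subalg[OF G W] .
  have spG: "space G = space M" using G unfolding subalgebra_def by auto
  have Kprob: "\<And>\<omega>. \<omega> \<in> space M \<Longrightarrow> prob_space (K \<omega>) \<and> sets (K \<omega>) = sets N"
    using measurable_space[OF KM] by (auto simp: space_prob_algebra)
  define \<mu>1 where "\<mu>1 = distr M (Q \<Otimes>\<^sub>M N) (\<lambda>\<omega>. (W \<omega>, Y \<omega>))"
  define k2 where "k2 = (\<lambda>\<omega>. distr (K \<omega>) (Q \<Otimes>\<^sub>M N) (\<lambda>z. (W \<omega>, z)))"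
  define \<mu>2 where "\<mu>2 = M \<bind> k2"
  have WY: "(\<lambda>\<omega>. (W \<omega>, Y \<omega>)) \<in> M \<rightarrow>\<^sub>M Q \<Otimes>\<^sub>M N" using WM Y by measurable
  have k2m: "k2 \<in> M \<rightarrow>\<^sub>M subprob_algebra (Q \<Otimes>\<^sub>M N)"
    unfolding k2_def
  proof (rule measurable_distr2[where M=N])
    show "(\<lambda>(\<omega>, z). (W \<omega>, z)) \<in> M \<Otimes>\<^sub>M N \<rightarrow>\<^sub>M Q \<Otimes>\<^sub>M N" using WM by measurable
  qed (rule KMs)
  have ne: "space M \<noteq> {}" by (rule not_empty)
  have "\<mu>1 = \<mu>2"
  proof (rule measure_eqI_generator_eq[where E="{a \<times> b | a b. a \<in> sets Q \<and> b \<in> sets N}"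
        and \<Omega>="space Q \<times> space N" and A="\<lambda>_. space Q \<times> space N"])
    show "Int_stable {a \<times> b | a b. a \<in> sets Q \<and> b \<in> sets N}"
      by (rule Int_stable_pair_measure_generator)
    show "{a \<times> b | a b. a \<in> sets Q \<and> b \<in> sets N} \<subseteq> Pow (space Q \<times> space N)"
      using sets.sets_into_space[of _ Q] sets.sets_into_space[of _ N] by auto
    show "sets \<mu>1 = sigma_sets (space Q \<times> space N) {a \<times> b | a b. a \<in> sets Q \<and> b \<in> sets N}"
      unfolding \<mu>1_def by (simp add: sets_pair_measure)
    show "sets \<mu>2 = sigma_sets (space Q \<times> space N) {a \<times> b | a b. a \<in> sets Q \<and> b \<in> sets N}"
      unfolding \<mu>2_def using sets_bind[of M k2 "Q \<Otimes>\<^sub>M N"] ne by (simp add: k2_def sets_pair_measure)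
    show "range (\<lambda>_. space Q \<times> space N) \<subseteq> {a \<times> b | a b. a \<in> sets Q \<and> b \<in> sets N}" by blast
    show "(\<Union>i. space Q \<times> space N) = space Q \<times> space N" by simp
    show "\<And>i. emeasure \<mu>1 (space Q \<times> space N) \<noteq> \<infinity>"
      unfolding \<mu>1_def by (simp add: emeasure_distr WY)
  next
    fix X assume "X \<in> {a \<times> b | a b. a \<in> sets Q \<and> b \<in> sets N}"
    then obtain a b where X: "X = a \<times> b" and a: "a \<in> sets Q" and b: "b \<in> sets N" by blast
    have XQN: "X \<in> sets (Q \<Otimes>\<^sub>M N)" using X a b by auto
    define A where "A = W -` a \<inter> space M"
    have AG: "A \<in> sets G" unfolding A_def using measurable_sets[OF W a] spG by simp
    have AM: "A \<in> sets M" unfolding A_def using measurable_sets[OF WM a] by simp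
    have "emeasure \<mu>1 X = emeasure M ({\<omega>\<in>space M. Y \<omega> \<in> b} \<inter> A)"
      unfolding \<mu>1_def using XQN WY by (subst emeasure_distr) (auto simp: X A_def intro!: arg_cong[where f="emeasure M"])
    also have "\<dots> = ennreal (measure M ({\<omega>\<in>space M. Y \<omega> \<in> b} \<inter> A))"
      by (simp add: emeasure_eq_measure)
    also have "\<dots> = ennreal (LINT \<omega>:A|M. measure (K \<omega>) b)" using Keq[OF AG b] by simp
    also have "\<dots> = (\<integral>\<^sup>+\<omega>. ennreal (indicator A \<omega> * measure (K \<omega>) b) \<partial>M)"
    proof -
      have mb: "(\<lambda>\<omega>. measure (K \<omega>) b) \<in> borel_measurable M"
        using measurable_compose[OF KMs measurable_emeasure_subprob_algebra[OF b]]
        unfolding measure_def by (intro borel_measurable_enn2real) simp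
      have int: "integrable M (\<lambda>\<omega>. indicator A \<omega> * measure (K \<omega>) b)"
        by (rule integrable_const_bound[where B=1]) (use mb AM Kprob prob_space.prob_le_1 in \<open>auto simp: indicator_def intro!: AE_I2\<close>)
      show ?thesis unfolding set_lebesgue_integral_def
        by (subst nn_integral_eq_integral[OF int]) (auto)
    qed
    also have "\<dots> = (\<integral>\<^sup>+\<omega>. emeasure (k2 \<omega>) X \<partial>M)"
    proof (rule nn_integral_cong)
      fix \<omega> assume \<omega>: "\<omega> \<in> space M"
      then have P: "prob_space (K \<omega>)" "sets (K \<omega>) = sets N" using Kprob by auto
      have Wo: "W \<omega> \<in> space Q" using measurable_space[OF WM \<omega>] .
      have "emeasure (k2 \<omega>) X = emeasure (K \<omega>) ((\<lambda>z. (W \<omega>, z)) -` X \<inter> space (K \<omega>))"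
        unfolding k2_def using XQN Wo P(2)
        by (subst emeasure_distr) (auto simp: measurable_def sets_eq_imp_space_eq[OF P(2)] space_pair_measure)
      also have "\<dots> = indicator A \<omega> * emeasure (K \<omega>) b"
        using \<omega> sets_eq_imp_space_eq[OF P(2)] sets.sets_into_space[OF b]
        by (auto simp: X A_def indicator_def intro!: arg_cong[where f="emeasure (K \<omega>)"])
      also have "\<dots> = ennreal (indicator A \<omega> * measure (K \<omega>) b)"
      proof -
        interpret P: prob_space "K \<omega>" by (rule P(1))
        show ?thesis by (simp add: indicator_def P.emeasure_eq_measure)
      qed
      finally show "ennreal (indicator A \<omega> * measure (K \<omega>) b) = emeasure (k2 \<omega>) X" by simp
    qed
    also have "\<dots> = emeasure \<mu>2 X" unfolding \<mu>2_def
      by (rule emeasure_bind[symmetric, OF ne k2m XQN])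
    finally show "emeasure \<mu>1 X = emeasure \<mu>2 X" .
  qed
  have "(\<integral>\<^sup>+\<omega>. h (W \<omega>, Y \<omega>) \<partial>M) = (\<integral>\<^sup>+x. h x \<partial>\<mu>1)"
    unfolding \<mu>1_def using h by (subst nn_integral_distr[OF WY]) simp_all
  also have "\<dots> = (\<integral>\<^sup>+x. h x \<partial>\<mu>2)" using \<open>\<mu>1 = \<mu>2\<close> by simp
  also have "\<dots> = (\<integral>\<^sup>+\<omega>. (\<integral>\<^sup>+x. h x \<partial>k2 \<omega>) \<partial>M)"
    unfolding \<mu>2_def by (rule nn_integral_bind[OF h k2m])
  also have "\<dots> = (\<integral>\<^sup>+\<omega>. (\<integral>\<^sup>+z. h (W \<omega>, z) \<partial>K \<omega>) \<partial>M)"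
  proof (rule nn_integral_cong)
    fix \<omega> assume \<omega>: "\<omega> \<in> space M"
    then have P: "sets (K \<omega>) = sets N" using Kprob by auto
    have Wo: "W \<omega> \<in> space Q" using measurable_space[OF WM \<omega>] .
    have "(\<lambda>z. (W \<omega>, z)) \<in> K \<omega> \<rightarrow>\<^sub>M Q \<Otimes>\<^sub>M N"
      using Wo by (simp add: measurable_cong_sets[OF P refl] measurable_Pair2')
    then show "(\<integral>\<^sup>+x. h x \<partial>k2 \<omega>) = (\<integral>\<^sup>+z. h (W \<omega>, z) \<partial>K \<omega>)"
      unfolding k2_def by (simp add: nn_integral_distr h)
  qed
  finally show ?thesis .
qed

lemma powr_m1: "x > 0 \<Longrightarrow> x powr (p - 1) = x powr p / (x::real)"
  by (simp add: powr_diff)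

lemma holder_fin:
  fixes D w :: "'i \<Rightarrow> real"
  assumes S: "finite S" and p: "p \<ge> 1" and w: "\<And>k. k\<in>S \<Longrightarrow> w k > 0" and D: "\<And>k. k\<in>S \<Longrightarrow> D k \<ge> 0"
  shows "(\<Sum>k\<in>S. D k) powr p \<le> (\<Sum>k\<in>S. w k) powr (p-1) * (\<Sum>k\<in>S. D k powr p / w k powr (p-1))"
proof -
  define S' where "S' = {k\<in>S. D k > 0}"
  have fin: "finite S'" using S unfolding S'_def by simp
  have sub: "S' \<subseteq> S" unfolding S'_def by auto
  have sumD: "(\<Sum>k\<in>S. D k) = (\<Sum>k\<in>S'. D k)"
    by (rule sum.mono_neutral_right[OF S sub]) (use D in \<open>force simp: S'_def\<close>)
  have sumR: "(\<Sum>k\<in>S. D k powr p / w k powr (p-1)) = (\<Sum>k\<in>S'. D k powr p / w k powr (p-1))"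
    by (rule sum.mono_neutral_right[OF S sub]) (use D in \<open>force simp: S'_def\<close>)
  have sumW: "(\<Sum>k\<in>S'. w k) \<le> (\<Sum>k\<in>S. w k)"
    by (rule sum_mono2[OF S sub]) (use w in \<open>auto intro: less_imp_le\<close>)
  have Rnn: "0 \<le> (\<Sum>k\<in>S'. D k powr p / w k powr (p-1))"
    by (rule sum_nonneg) simp
  show ?thesis
  proof (cases "S' = {}")
    case True
    then show ?thesis using sumD sumR Rnn by simp
  next
    case False
    define W' where "W' = (\<Sum>k\<in>S'. w k)"
    have W'pos: "W' > 0" unfolding W'_def using False fin sub w by (intro sum_pos) auto
    have conv: "(\<Sum>k\<in>S'. (w k / W') *\<^sub>R (W' * D k / w k)) powr p
        \<le> (\<Sum>k\<in>S'. (w k / W') * (W' * D k / w k) powr p)"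
    proof (rule convex_on_sum[OF fin False powr_convex[OF p]])
      show "(\<Sum>k\<in>S'. w k / W') = 1" using W'pos by (simp add: W'_def sum_divide_distrib[symmetric])
      show "\<And>k. k \<in> S' \<Longrightarrow> 0 \<le> w k / W'" using W'pos w sub by (auto intro!: less_imp_le)
      show "\<And>k. k \<in> S' \<Longrightarrow> W' * D k / w k \<in> {0<..}" using W'pos w sub by (auto simp: S'_def)
    qed
    have e1: "(\<Sum>k\<in>S'. (w k / W') *\<^sub>R (W' * D k / w k)) = (\<Sum>k\<in>S'. D k)"
      using w sub W'pos by (intro sum.cong) (auto, force)
    have e2: "(w k / W') * (W' * D k / w k) powr p = W' powr (p-1) * (D k powr p / w k powr (p-1))"
      if "k \<in> S'" for k
    proof -
      have "w k > 0" "D k > 0" using that w sub unfolding S'_def by auto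
      then show ?thesis using W'pos
        by (simp add: powr_m1 powr_mult powr_divide field_simps)
    qed
    have "(\<Sum>k\<in>S'. D k) powr p \<le> W' powr (p-1) * (\<Sum>k\<in>S'. D k powr p / w k powr (p-1))"
      using conv e1 e2 by (simp add: sum_distrib_left)
    also have "\<dots> \<le> (\<Sum>k\<in>S. w k) powr (p-1) * (\<Sum>k\<in>S'. D k powr p / w k powr (p-1))"
      using sumW W'pos p Rnn by (intro mult_right_mono powr_mono2) (auto simp: W'_def)
    finally show ?thesis using sumD sumR by simp
  qed
qed

lemma dist_le_sum:
  fixes f :: "nat \<Rightarrow> 'a::metric_space"
  shows "dist (f s) (f (s+n)) \<le> (\<Sum>k<n. dist (f (s+k)) (f (Suc (s+k))))"
proof (induction n)
  case 0 then show ?case by simp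
next
  case (Suc n)
  have "dist (f s) (f (s + Suc n)) \<le> dist (f s) (f (s+n)) + dist (f (s+n)) (f (Suc (s+n)))"
    using dist_triangle by simp
  then show ?case using Suc by simp
qed

lemma cauchy_from_summable:
  fixes f :: "nat \<Rightarrow> 'a::metric_space"
  assumes S: "summable (\<lambda>k. dist (f k) (f (Suc k)))"
  shows "Cauchy f"
  unfolding Cauchy_def
proof (intro allI impI)
  fix e :: real assume e: "e > 0"
  obtain N where N: "\<And>n. n\<ge>N \<Longrightarrow> norm (\<Sum>i. dist (f (i+n)) (f (Suc (i+n)))) < e"
    using suminf_exist_split[OF e S] by auto
  have key: "dist (f m) (f n) < e" if "N \<le> m" "m \<le> n" for m n
  proof -
    have Sm: "summable (\<lambda>i. dist (f (i+m)) (f (Suc (i+m))))"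
      using summable_ignore_initial_segment[OF S, of m] by simp
    have "dist (f m) (f n) = dist (f m) (f (m + (n-m)))" using that by simp
    also have "\<dots> \<le> (\<Sum>k<n-m. dist (f (m+k)) (f (Suc (m+k))))" by (rule dist_le_sum)
    also have "\<dots> \<le> (\<Sum>i. dist (f (i+m)) (f (Suc (i+m))))"
      using sum_le_suminf[OF Sm, of "{..<n-m}"] by (simp add: add.commute)
    also have "\<dots> < e" using N[OF that(1)] by simp
    finally show ?thesis .
  qed
  show "\<exists>M. \<forall>m\<ge>M. \<forall>n\<ge>M. dist (f m) (f n) < e"
  proof (intro exI allI impI)
    fix m n assume "N \<le> m" "N \<le> n"
    then show "dist (f m) (f n) < e"
      using key[of m n] key[of n m] by (cases "m \<le> n") (auto simp: dist_commute)
  qed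
qed

lemma powr_pow_swap: "(x::real) > 0 \<Longrightarrow> (x^k) powr a = (x powr a)^k"
  by (induct k) (simp_all add: powr_mult)

definition sig :: "real \<Rightarrow> real \<Rightarrow> real" where "sig \<rho> p = \<rho> powr (1/(2*p))"
definition tau :: "real \<Rightarrow> real \<Rightarrow> real" where "tau \<rho> p = \<rho> / (sig \<rho> p powr (p-1))"
definition Cr :: "real \<Rightarrow> real \<Rightarrow> real" where
  "Cr \<rho> p = 1 / ((1 - sig \<rho> p) powr (p-1) * (1 - tau \<rho> p))"

lemma sig_tau_facts:
  assumes p: "p \<ge> 1" and \<rho>: "0 < \<rho>" "\<rho> < 1"
  shows "0 < sig \<rho> p" "sig \<rho> p < 1" "0 < tau \<rho> p" "tau \<rho> p < 1" "Cr \<rho> p > 0"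
    "sig \<rho> p powr (p-1) > 0"
    "\<And>n. (sig \<rho> p powr (p-1))^n * tau \<rho> p ^ n = \<rho>^n"
proof -
  have e1: "1/(2*p) > 0" using p by simp
  show s0: "0 < sig \<rho> p" unfolding sig_def using \<rho> by simp
  have "\<rho> powr (1/(2*p)) < 1 powr (1/(2*p))" by (rule powr_less_mono2[OF e1]) (use \<rho> in auto)
  then show s1: "sig \<rho> p < 1" unfolding sig_def by simp
  show q0: "sig \<rho> p powr (p-1) > 0" using s0 by simp
  have q: "sig \<rho> p powr (p-1) = \<rho> powr ((p-1)/(2*p))" unfolding sig_def using \<rho> by (simp add: powr_powr)
  have "tau \<rho> p = \<rho> powr 1 / \<rho> powr ((p-1)/(2*p))" unfolding tau_def q using \<rho> by simp
  also have "\<dots> = \<rho> powr (1 - (p-1)/(2*p))" by (simp add: powr_diff)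
  finally have t: "tau \<rho> p = \<rho> powr (1 - (p-1)/(2*p))" .
  have e2: "1 - (p-1)/(2*p) > 0" using p by (simp add: field_simps)
  have "\<rho> powr (1 - (p-1)/(2*p)) < 1 powr (1 - (p-1)/(2*p))" by (rule powr_less_mono2[OF e2]) (use \<rho> in auto)
  then show t1: "tau \<rho> p < 1" using t by simp
  show t0: "0 < tau \<rho> p" using t \<rho> by simp
  show "Cr \<rho> p > 0" unfolding Cr_def using s1 t1 by simp
  show "\<And>n. (sig \<rho> p powr (p-1))^n * tau \<rho> p ^ n = \<rho>^n"
    using q0 unfolding tau_def by (simp add: power_divide)
qed

lemma series_conv:
  fixes a :: "nat \<Rightarrow> 'w \<Rightarrow> 'a::polish_space"
  assumes meas: "\<And>s. a s \<in> borel_measurable M" and p: "p \<ge> 1" and \<rho>: "0 < \<rho>" "\<rho> < 1"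
    and B: "B \<ge> 0"
    and bnd: "\<And>s. (\<integral>\<^sup>+\<omega>. ennreal (dist (a s \<omega>) (a (Suc s) \<omega>) powr p) \<partial>M) \<le> ennreal (B * \<rho>^s)"
  shows "AE \<omega> in M. convergent (\<lambda>s. a s \<omega>)"
    and "\<And>X s. (AE \<omega> in M. (\<lambda>s. a s \<omega>) \<longlonglongrightarrow> X \<omega>) \<Longrightarrow>
           (\<integral>\<^sup>+\<omega>. ennreal (dist (a s \<omega>) (X \<omega>) powr p) \<partial>M) \<le> ennreal (Cr \<rho> p * B * \<rho>^s)"
proof -
  define \<sigma> where "\<sigma> = sig \<rho> p"
  define q where "q = \<sigma> powr (p-1)"
  define \<tau> where "\<tau> = tau \<rho> p"
  note F = sig_tau_facts[OF p \<rho>, folded \<sigma>_def \<tau>_def, folded q_def]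
  have \<tau>q: "\<tau> = \<rho> / q" unfolding \<tau>_def q_def \<sigma>_def tau_def ..
  define D where "D k \<omega> = dist (a k \<omega>) (a (Suc k) \<omega>)" for k \<omega>
  define E where "E s \<omega> = (\<Sum>k. ennreal (D (s+k) \<omega> powr p / q^(s+k)))" for s \<omega>
  define cs where "cs s = (\<sigma>^s / (1-\<sigma>)) powr (p-1)" for s
  have Dm[measurable]: "\<And>k. D k \<in> borel_measurable M" unfolding D_def using meas by measurable
  have Em: "\<And>s. E s \<in> borel_measurable M" unfolding E_def by measurable
  have intE: "(\<integral>\<^sup>+\<omega>. E s \<omega> \<partial>M) \<le> ennreal (B * \<tau>^s / (1-\<tau>))" for s
  proof -
    have "(\<integral>\<^sup>+\<omega>. E s \<omega> \<partial>M) = (\<Sum>k. \<integral>\<^sup>+\<omega>. ennreal (D (s+k) \<omega> powr p / q^(s+k)) \<partial>M)"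
      unfolding E_def by (rule nn_integral_suminf) measurable
    also have "\<dots> \<le> (\<Sum>k. ennreal (B * \<tau>^(s+k)))"
    proof (rule suminf_le)
      fix k
      have "(\<integral>\<^sup>+\<omega>. ennreal (D (s+k) \<omega> powr p / q^(s+k)) \<partial>M)
          = (\<integral>\<^sup>+\<omega>. ennreal (D (s+k) \<omega> powr p) * ennreal (1 / q^(s+k)) \<partial>M)"
        by (intro nn_integral_cong) (subst ennreal_mult'[symmetric], simp_all)
      also have "\<dots> = (\<integral>\<^sup>+\<omega>. ennreal (D (s+k) \<omega> powr p) \<partial>M) * ennreal (1 / q^(s+k))"
        by (rule nn_integral_multc) measurable
      also have "\<dots> \<le> ennreal (B * \<rho>^(s+k)) * ennreal (1 / q^(s+k))"
        using bnd[of "s+k"] unfolding D_def by (intro mult_right_mono) auto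
      also have "\<dots> = ennreal (B * \<tau>^(s+k))"
        using F B \<rho> by (subst ennreal_mult'[symmetric]) (simp_all add: \<tau>q power_divide)
      finally show "(\<integral>\<^sup>+\<omega>. ennreal (D (s+k) \<omega> powr p / q^(s+k)) \<partial>M) \<le> ennreal (B * \<tau>^(s+k))" .
    qed auto
    also have "\<dots> = ennreal (B * \<tau>^s / (1-\<tau>))"
    proof (rule suminf_ennreal_eq)
      show "\<And>i. 0 \<le> B * \<tau>^(s+i)" using B F by simp
      have "(\<lambda>k. (B * \<tau>^s) * \<tau>^k) sums ((B * \<tau>^s) * (1 / (1 - \<tau>)))"
        by (rule sums_mult, rule geometric_sums) (use F in auto)
      then show "(\<lambda>k. B * \<tau>^(s+k)) sums (B * \<tau>^s / (1-\<tau>))"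
        by (simp add: power_add mult.assoc)
    qed
    finally show ?thesis .
  qed
  have pw: "ennreal (dist (a s \<omega>) (a (s+n) \<omega>) powr p) \<le> ennreal (cs s) * E s \<omega>" for s n \<omega>
  proof -
    have D0: "\<And>k. D k \<omega> \<ge> 0" unfolding D_def by simp
    have "dist (a s \<omega>) (a (s+n) \<omega>) \<le> (\<Sum>k<n. D (s+k) \<omega>)"
      unfolding D_def by (rule dist_le_sum[of "\<lambda>k. a k \<omega>"])
    then have "dist (a s \<omega>) (a (s+n) \<omega>) powr p \<le> (\<Sum>k<n. D (s+k) \<omega>) powr p"
      using p by (intro powr_mono2) auto
    also have "\<dots> \<le> (\<Sum>k<n. \<sigma>^(s+k)) powr (p-1) * (\<Sum>k<n. D (s+k) \<omega> powr p / (\<sigma>^(s+k)) powr (p-1))"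
      by (rule holder_fin) (use p F D0 in auto)
    also have "\<dots> \<le> cs s * (\<Sum>k<n. D (s+k) \<omega> powr p / q^(s+k))"
    proof (rule mult_mono)
      have "(\<Sum>k<n. \<sigma>^(s+k)) = \<sigma>^s * (\<Sum>k<n. \<sigma>^k)" by (simp add: power_add sum_distrib_left)
      also have "\<dots> \<le> \<sigma>^s / (1-\<sigma>)"
        using F by (simp add: sum_gp_strict field_simps)
      finally show "(\<Sum>k<n. \<sigma>^(s+k)) powr (p-1) \<le> cs s"
        unfolding cs_def using p F by (intro powr_mono2) (auto intro!: sum_nonneg)
      show "(\<Sum>k<n. D (s+k) \<omega> powr p / (\<sigma>^(s+k)) powr (p-1)) \<le> (\<Sum>k<n. D (s+k) \<omega> powr p / q^(s+k))"
        using F by (simp add: powr_pow_swap q_def)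
    qed (auto simp: cs_def intro!: sum_nonneg)
    finally have r: "dist (a s \<omega>) (a (s+n) \<omega>) powr p \<le> cs s * (\<Sum>k<n. D (s+k) \<omega> powr p / q^(s+k))" .
    have "ennreal (dist (a s \<omega>) (a (s+n) \<omega>) powr p) \<le> ennreal (cs s * (\<Sum>k<n. D (s+k) \<omega> powr p / q^(s+k)))"
      using r by (rule ennreal_leI)
    also have "\<dots> = ennreal (cs s) * (\<Sum>k<n. ennreal (D (s+k) \<omega> powr p / q^(s+k)))"
      using F by (simp add: ennreal_mult cs_def sum_nonneg)
    also have "\<dots> \<le> ennreal (cs s) * E s \<omega>"
      unfolding E_def by (intro mult_left_mono sum_le_suminf) auto
    finally show ?thesis .
  qed
  have finE: "AE \<omega> in M. E 0 \<omega> \<noteq> \<infinity>"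
    by (rule nn_integral_PInf_AE[OF Em]) (use intE[of 0] in \<open>auto simp: top_unique\<close>)
  show "AE \<omega> in M. convergent (\<lambda>s. a s \<omega>)"
    using finE
  proof eventually_elim
    case (elim \<omega>)
    define R where "R = (cs 0 * enn2real (E 0 \<omega>)) powr (1/p)"
    have bd: "(\<Sum>k<n. D k \<omega>) \<le> R" for n
    proof -
      have D0: "\<And>k. D k \<omega> \<ge> 0" unfolding D_def by simp
      have "(\<Sum>k<n. \<sigma>^(0+k)) powr (p-1) * (\<Sum>k<n. D (0+k) \<omega> powr p / (\<sigma>^(0+k)) powr (p-1))
          \<le> cs 0 * (\<Sum>k<n. D (0+k) \<omega> powr p / q^(0+k))"
      proof (rule mult_mono)
        have "(\<Sum>k<n. \<sigma>^(0+k)) \<le> \<sigma>^0 / (1-\<sigma>)"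
          using F by (simp add: sum_gp_strict field_simps)
        then show "(\<Sum>k<n. \<sigma>^(0+k)) powr (p-1) \<le> cs 0"
          unfolding cs_def using p F by (intro powr_mono2) (auto intro!: sum_nonneg)
        show "(\<Sum>k<n. D (0+k) \<omega> powr p / (\<sigma>^(0+k)) powr (p-1)) \<le> (\<Sum>k<n. D (0+k) \<omega> powr p / q^(0+k))"
          using F by (simp add: powr_pow_swap q_def)
      qed (auto simp: cs_def intro!: sum_nonneg)
      with holder_fin[of "{..<n}" p "\<lambda>k. \<sigma>^(0+k)" "\<lambda>k. D (0+k) \<omega>"] p F D0
      have h: "(\<Sum>k<n. D k \<omega>) powr p \<le> cs 0 * (\<Sum>k<n. D k \<omega> powr p / q^k)" by simp
      have "ennreal (\<Sum>k<n. D k \<omega> powr p / q^k) = (\<Sum>k<n. ennreal (D k \<omega> powr p / q^k))"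
        using F by (simp add: sum_nonneg)
      also have "\<dots> \<le> E 0 \<omega>" unfolding E_def by (simp, intro sum_le_suminf) auto
      finally have le: "ennreal (\<Sum>k<n. D k \<omega> powr p / q^k) \<le> E 0 \<omega>" .
      have nn: "0 \<le> (\<Sum>k<n. D k \<omega> powr p / q^k)" using F by (simp add: sum_nonneg)
      have "enn2real (ennreal (\<Sum>k<n. D k \<omega> powr p / q^k)) \<le> enn2real (E 0 \<omega>)"
        by (rule enn2real_mono[OF le]) (use elim in \<open>simp add: less_top\<close>)
      then have le2: "(\<Sum>k<n. D k \<omega> powr p / q^k) \<le> enn2real (E 0 \<omega>)" using nn by simp
      have "(\<Sum>k<n. D k \<omega>) powr p \<le> cs 0 * enn2real (E 0 \<omega>)"
        by (rule order.trans[OF h], rule mult_left_mono[OF le2]) (simp add: cs_def)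
      then have "((\<Sum>k<n. D k \<omega>) powr p) powr (1/p) \<le> R"
        unfolding R_def using p by (intro powr_mono2) auto
      then show ?thesis using p D0 by (simp add: powr_powr sum_nonneg)
    qed
    have "summable (\<lambda>k. D k \<omega>)"
      by (rule summableI_nonneg_bounded[where x=R]) (use bd in \<open>auto simp: D_def\<close>)
    then have "Cauchy (\<lambda>s. a s \<omega>)" unfolding D_def by (rule cauchy_from_summable)
    then show ?case by (simp add: Cauchy_convergent_iff)
  qed
  fix X s assume conv: "AE \<omega> in M. (\<lambda>s. a s \<omega>) \<longlonglongrightarrow> X \<omega>"
  have "(\<integral>\<^sup>+\<omega>. ennreal (dist (a s \<omega>) (X \<omega>) powr p) \<partial>M) \<le> (\<integral>\<^sup>+\<omega>. ennreal (cs s) * E s \<omega> \<partial>M)"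
  proof (rule nn_integral_mono_AE)
    show "AE \<omega> in M. ennreal (dist (a s \<omega>) (X \<omega>) powr p) \<le> ennreal (cs s) * E s \<omega>"
      using conv
    proof eventually_elim
      case (elim \<omega>)
      have t: "(\<lambda>n. a (s+n) \<omega>) \<longlonglongrightarrow> X \<omega>"
        using LIMSEQ_ignore_initial_segment[OF elim, of s] by (simp add: add.commute)
      have "(\<lambda>n. ennreal (dist (a s \<omega>) (a (s+n) \<omega>) powr p)) \<longlonglongrightarrow> ennreal (dist (a s \<omega>) (X \<omega>) powr p)"
        using p by (intro tendsto_ennrealI tendsto_powr' tendsto_dist tendsto_const t) auto
      then show ?case
        by (rule LIMSEQ_le_const2) (use pw in auto)
    qed
  qed
  also have "\<dots> = ennreal (cs s) * (\<integral>\<^sup>+\<omega>. E s \<omega> \<partial>M)" by (rule nn_integral_cmult[OF Em])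
  also have "\<dots> \<le> ennreal (cs s) * ennreal (B * \<tau>^s / (1-\<tau>))" by (intro mult_left_mono intE) auto
  also have "\<dots> = ennreal (Cr \<rho> p * B * \<rho>^s)"
  proof -
    have "cs s = q^s / (1-\<sigma>) powr (p-1)"
      unfolding cs_def q_def using F by (simp add: powr_divide powr_pow_swap)
    then have "cs s * (B * \<tau>^s / (1-\<tau>)) = Cr \<rho> p * B * (q^s * \<tau>^s)"
      unfolding Cr_def \<sigma>_def \<tau>_def by (simp add: field_simps)
    then show ?thesis using F B by (simp add: ennreal_mult[symmetric] cs_def)
  qed
  finally show "(\<integral>\<^sup>+\<omega>. ennreal (dist (a s \<omega>) (X \<omega>) powr p) \<partial>M) \<le> ennreal (Cr \<rho> p * B * \<rho>^s)" .
qed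

lemma space_path_space[simp]: "space (path_space :: (int \<Rightarrow> 'c::topological_space) measure) = UNIV"
  unfolding path_space_def by (simp add: space_PiM)

lemma sets_path_space_cong: "sets (path_space :: (int \<Rightarrow> 'c::topological_space) measure) = sets (PiM UNIV (\<lambda>_. borel))"
  unfolding path_space_def ..

lemma measurable_path_spaceI:
  assumes "\<And>t. (\<lambda>\<omega>. f \<omega> t) \<in> N \<rightarrow>\<^sub>M (borel :: 'c::topological_space measure)"
  shows "f \<in> N \<rightarrow>\<^sub>M (path_space :: (int \<Rightarrow> 'c) measure)"
proof -
  have "(\<lambda>\<omega> t. f \<omega> t) \<in> N \<rightarrow>\<^sub>M PiM UNIV (\<lambda>_. (borel :: 'c measure))"
    by (rule measurable_PiM_single'[where f="\<lambda>t \<omega>. f \<omega> t"]) (use assms in auto)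
  then show ?thesis unfolding path_space_def by simp
qed

lemma measurable_path_comp:
  "(\<lambda>w. w t) \<in> (path_space :: (int \<Rightarrow> 'c::topological_space) measure) \<rightarrow>\<^sub>M borel"
  unfolding path_space_def by simp

lemma measurable_shift: "(\<lambda>w k. w (t + k)) \<in> (path_space :: (int \<Rightarrow> 'c::topological_space) measure) \<rightarrow>\<^sub>M path_space"
  by (rule measurable_path_spaceI) (rule measurable_path_comp)

lemma stat_erg:
  fixes \<zeta> :: "int \<Rightarrow> 'w \<Rightarrow> 'b::polish_space" and g :: "(int \<Rightarrow> 'b) \<Rightarrow> 'a::polish_space"
  assumes \<zeta>m: "\<And>t. \<zeta> t \<in> M \<rightarrow>\<^sub>M borel" and g: "g \<in> path_space \<rightarrow>\<^sub>M borel"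
  shows "stationary M \<zeta> \<Longrightarrow> stationary M (\<lambda>t \<omega>. (g (\<lambda>k. \<zeta> (t+k) \<omega>), \<zeta> t \<omega>))"
    and "ergodic M \<zeta> \<Longrightarrow> ergodic M (\<lambda>t \<omega>. (g (\<lambda>k. \<zeta> (t+k) \<omega>), \<zeta> t \<omega>))"
proof -
  define \<Psi> :: "(int \<Rightarrow> 'b) \<Rightarrow> int \<Rightarrow> 'a \<times> 'b" where "\<Psi> w = (\<lambda>t. (g (\<lambda>k. w (t+k)), w t))" for w
  have \<Psi>m: "\<Psi> \<in> path_space \<rightarrow>\<^sub>M path_space"
    unfolding \<Psi>_def
  proof (rule measurable_path_spaceI)
    fix t
    have "(\<lambda>w. (g (\<lambda>k. w (t+k)), w t)) \<in> (path_space :: (int \<Rightarrow> 'b) measure) \<rightarrow>\<^sub>M borel \<Otimes>\<^sub>M borel"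
      by (intro measurable_Pair measurable_compose[OF measurable_shift g] measurable_path_comp)
    then show "(\<lambda>w. (g (\<lambda>k. w (t+k)), w t)) \<in> (path_space :: (int \<Rightarrow> 'b) measure) \<rightarrow>\<^sub>M borel"
      by (simp add: borel_prod)
  qed
  have law: "proc_law M (\<lambda>t \<omega>. (g (\<lambda>k. \<zeta>' (t+k) \<omega>), \<zeta>' t \<omega>)) = distr (proc_law M \<zeta>') path_space \<Psi>"
    if \<zeta>'m: "\<And>t. \<zeta>' t \<in> M \<rightarrow>\<^sub>M borel" for \<zeta>' :: "int \<Rightarrow> 'w \<Rightarrow> 'b"
  proof -
    have Pm: "(\<lambda>\<omega> t. \<zeta>' t \<omega>) \<in> M \<rightarrow>\<^sub>M path_space" by (rule measurable_path_spaceI) (rule \<zeta>'m)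
    show ?thesis unfolding proc_law_def
      by (subst distr_distr[OF \<Psi>m Pm]) (simp add: \<Psi>_def o_def)
  qed
  show "stationary M (\<lambda>t \<omega>. (g (\<lambda>k. \<zeta> (t+k) \<omega>), \<zeta> t \<omega>))" if st: "stationary M \<zeta>"
    unfolding stationary_def
  proof
    fix k
    have e: "(\<lambda>t. (\<lambda>t \<omega>. (g (\<lambda>k. \<zeta> (t+k) \<omega>), \<zeta> t \<omega>)) (t + k))
        = (\<lambda>t \<omega>. (g (\<lambda>j. (\<lambda>t. \<zeta> (t+k)) (t+j) \<omega>), (\<lambda>t. \<zeta> (t+k)) t \<omega>))"
      by (simp add: algebra_simps)
    show "proc_law M (\<lambda>t. (\<lambda>t \<omega>. (g (\<lambda>k. \<zeta> (t+k) \<omega>), \<zeta> t \<omega>)) (t + k)) =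
          proc_law M (\<lambda>t \<omega>. (g (\<lambda>k. \<zeta> (t+k) \<omega>), \<zeta> t \<omega>))"
      unfolding e using st unfolding stationary_def
      by (subst law, simp add: \<zeta>m, subst law[OF \<zeta>m]) simp
  qed
  show "ergodic M (\<lambda>t \<omega>. (g (\<lambda>k. \<zeta> (t+k) \<omega>), \<zeta> t \<omega>))" if er: "ergodic M \<zeta>"
    unfolding ergodic_def
  proof (intro ballI impI)
    fix A :: "(int \<Rightarrow> 'a \<times> 'b) set"
    assume A: "A \<in> sets path_space" and inv: "(\<lambda>w t. w (t + 1)) -` A \<inter> space path_space = A"
    define A' where "A' = \<Psi> -` A \<inter> space path_space"
    have A'm: "A' \<in> sets path_space" unfolding A'_def using measurable_sets[OF \<Psi>m A] .
    have comm: "\<Psi> (\<lambda>t. w (t + 1)) = (\<lambda>t. \<Psi> w (t + 1))" for w :: "int \<Rightarrow> 'b"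
      unfolding \<Psi>_def by (simp add: algebra_simps)
    have inv': "(\<lambda>w t. w (t + 1)) -` A' \<inter> space path_space = A'"
    proof -
      have "(\<lambda>w t. w (t + 1)) -` A' = {w. \<Psi> (\<lambda>t. w (t + 1)) \<in> A}" unfolding A'_def by auto
      also have "\<dots> = {w. (\<lambda>t. \<Psi> w (t + 1)) \<in> A}" by (simp add: comm)
      also have "\<dots> = {w. \<Psi> w \<in> (\<lambda>w t. w (t + 1)) -` A}" by simp
      also have "\<dots> = A'" using inv unfolding A'_def by (auto simp: vimage_def)
      finally show ?thesis by simp
    qed
    have "measure (proc_law M (\<lambda>t \<omega>. (g (\<lambda>k. \<zeta> (t+k) \<omega>), \<zeta> t \<omega>))) A = measure (proc_law M \<zeta>) A'"
    proof -
      have \<Psi>m': "\<Psi> \<in> proc_law M \<zeta> \<rightarrow>\<^sub>M path_space"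
        using \<Psi>m measurable_cong_sets[of "proc_law M \<zeta>" path_space path_space path_space]
        by (simp add: proc_law_def)
      have "measure (distr (proc_law M \<zeta>) path_space \<Psi>) A = measure (proc_law M \<zeta>) (\<Psi> -` A \<inter> space (proc_law M \<zeta>))"
        by (rule measure_distr[OF \<Psi>m']) (use A in simp)
      then show ?thesis using law[of \<zeta>, OF \<zeta>m] unfolding A'_def by (simp add: proc_law_def)
    qed
    then show "measure (proc_law M (\<lambda>t \<omega>. (g (\<lambda>k. \<zeta> (t+k) \<omega>), \<zeta> t \<omega>))) A = 0 \<or>
          measure (proc_law M (\<lambda>t \<omega>. (g (\<lambda>k. \<zeta> (t+k) \<omega>), \<zeta> t \<omega>))) A = 1"
      using er A'm inv' unfolding ergodic_def by auto
  qed
qed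

lemma ae_dist_to_0:
  fixes a b :: "nat \<Rightarrow> 'w \<Rightarrow> 'a::polish_space"
  assumes meas: "\<And>s. a s \<in> borel_measurable M" "\<And>s. b s \<in> borel_measurable M" and p: "p > 0"
    and \<rho>: "0 < \<rho>" "\<rho> < 1" and B: "B \<ge> 0"
    and bnd: "\<And>s. (\<integral>\<^sup>+\<omega>. ennreal (dist (a s \<omega>) (b s \<omega>) powr p) \<partial>M) \<le> ennreal (B * \<rho>^s)"
  shows "AE \<omega> in M. (\<lambda>s. dist (a s \<omega>) (b s \<omega>)) \<longlonglongrightarrow> 0"
proof -
  define G where "G \<omega> = (\<Sum>s. ennreal (dist (a s \<omega>) (b s \<omega>) powr p))" for \<omega>
  have Gm: "G \<in> borel_measurable M" unfolding G_def using meas by measurable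
  have "(\<integral>\<^sup>+\<omega>. G \<omega> \<partial>M) = (\<Sum>s. \<integral>\<^sup>+\<omega>. ennreal (dist (a s \<omega>) (b s \<omega>) powr p) \<partial>M)"
    unfolding G_def by (rule nn_integral_suminf) (use meas in measurable)
  also have "\<dots> \<le> (\<Sum>s. ennreal (B * \<rho>^s))" by (rule suminf_le) (use bnd in auto)
  also have "\<dots> = ennreal (B * (1 / (1 - \<rho>)))"
    by (rule suminf_ennreal_eq) (use B \<rho> sums_mult[OF geometric_sums[of \<rho>], of B] in auto)
  finally have "(\<integral>\<^sup>+\<omega>. G \<omega> \<partial>M) \<noteq> \<infinity>" by (auto simp: top_unique)
  then have "AE \<omega> in M. G \<omega> \<noteq> \<infinity>" by (rule nn_integral_PInf_AE[OF Gm])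
  then show ?thesis
  proof eventually_elim
    case (elim \<omega>)
    have "summable (\<lambda>s. dist (a s \<omega>) (b s \<omega>) powr p)"
      by (rule summable_suminf_not_top) (use elim in \<open>auto simp: G_def\<close>)
    then have t: "(\<lambda>s. dist (a s \<omega>) (b s \<omega>) powr p) \<longlonglongrightarrow> 0" by (rule summable_LIMSEQ_zero)
    have "(\<lambda>s. (dist (a s \<omega>) (b s \<omega>) powr p) powr (1/p)) \<longlonglongrightarrow> 0 powr (1/p)"
      by (rule tendsto_powr'[OF t tendsto_const]) (use p in auto)
    then show ?case using p by (simp add: powr_powr)
  qed
qed

lemma tri3:
  fixes a b c p :: real
  assumes "p \<ge> 1" "a \<ge> 0" "b \<ge> 0" "c \<ge> 0"
  shows "(a + b + c) powr p \<le> 3 powr (p-1) * (a powr p + b powr p + c powr p)"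
proof -
  define D :: "nat \<Rightarrow> real" where "D k = (if k = 0 then a else if k = 1 then b else c)" for k
  have "(\<Sum>k\<in>{0,1,2}. D k) powr p \<le> (\<Sum>k\<in>{0::nat,1,2}. 1) powr (p-1) * (\<Sum>k\<in>{0,1,2}. D k powr p / 1 powr (p-1))"
    by (rule holder_fin) (use assms in \<open>auto simp: D_def\<close>)
  then show ?thesis by (simp add: D_def add.assoc)
qed

lemma convergent_set_measurable:
  fixes f :: "nat \<Rightarrow> 'w \<Rightarrow> 'a::polish_space"
  assumes [measurable]: "\<And>s. f s \<in> borel_measurable N"
  shows "Measurable.pred N (\<lambda>w. convergent (\<lambda>s. f s w))"
proof -
  have e: "convergent (\<lambda>s. f s w) \<longleftrightarrow> (\<forall>j::nat. \<exists>K::nat. \<forall>m\<ge>K. \<forall>n\<ge>K. dist (f m w) (f n w) < 1 / Suc j)" for w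
  proof -
    have "convergent (\<lambda>s. f s w) \<longleftrightarrow> Cauchy (\<lambda>s. f s w)" by (simp add: Cauchy_convergent_iff)
    also have "\<dots> \<longleftrightarrow> (\<forall>j::nat. \<exists>K::nat. \<forall>m\<ge>K. \<forall>n\<ge>K. dist (f m w) (f n w) < 1 / Suc j)"
    proof
      assume "Cauchy (\<lambda>s. f s w)"
      then show "\<forall>j::nat. \<exists>K::nat. \<forall>m\<ge>K. \<forall>n\<ge>K. dist (f m w) (f n w) < 1 / Suc j"
        unfolding Cauchy_def by simp
    next
      assume H: "\<forall>j::nat. \<exists>K::nat. \<forall>m\<ge>K. \<forall>n\<ge>K. dist (f m w) (f n w) < 1 / Suc j"
      show "Cauchy (\<lambda>s. f s w)" unfolding Cauchy_def
      proof (intro allI impI)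
        fix e :: real assume "e > 0"
        then obtain j :: nat where j: "1 / Suc j < e" using nat_approx_posE by blast
        then show "\<exists>K. \<forall>m\<ge>K. \<forall>n\<ge>K. dist (f m w) (f n w) < e"
          using H by (meson order.strict_trans)
      qed
    qed
    finally show ?thesis .
  qed
  show ?thesis unfolding e by measurable
qed

lemma fiter_cong: "(\<And>i. i < n \<Longrightarrow> z i = z' i) \<Longrightarrow> fiter F z n x = fiter F z' n x"
  by (induct n) auto

lemma fiter_add: "fiter F z (a + b) x = fiter F (\<lambda>i. z (a + i)) b (fiter F z a x)"
  by (induct b) (auto simp: add.commute[of a] add_Suc_right)

lemma fiter_meas_pi:
  fixes F :: "'a::polish_space \<Rightarrow> 'b::polish_space \<Rightarrow> 'a"
  assumes F_meas: "(\<lambda>(x, z). F x z) \<in> (borel \<Otimes>\<^sub>M borel) \<rightarrow>\<^sub>M borel"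
    and g: "g \<in> Q \<rightarrow>\<^sub>M borel" and n: "n \<le> m"
  shows "(\<lambda>w. fiter F (snd w) n (g (fst w))) \<in> Q \<Otimes>\<^sub>M PiM {..<m} (\<lambda>_. borel) \<rightarrow>\<^sub>M borel"
  using n
proof (induct n)
  case 0 then show ?case using g by simp
next
  case (Suc n)
  have a: "(\<lambda>w. fiter F (snd w) n (g (fst w))) \<in> Q \<Otimes>\<^sub>M PiM {..<m} (\<lambda>_. borel) \<rightarrow>\<^sub>M borel"
    using Suc by simp
  have b: "(\<lambda>w. snd w n) \<in> Q \<Otimes>\<^sub>M PiM {..<m} (\<lambda>_. (borel :: 'b measure)) \<rightarrow>\<^sub>M borel"
  proof -
    have "n \<in> {..<m}" using Suc(2) by simp
    then show ?thesis by measurable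
  qed
  have "(\<lambda>w. (fiter F (snd w) n (g (fst w)), snd w n)) \<in> Q \<Otimes>\<^sub>M PiM {..<m} (\<lambda>_. borel) \<rightarrow>\<^sub>M borel \<Otimes>\<^sub>M borel"
    using a b by (rule measurable_Pair)
  from measurable_compose[OF this F_meas] show ?case by simp
qed

locale th2 =
  fixes M :: "'w measure"
    and Fl :: "int \<Rightarrow> 'w measure"
    and F :: "'a::polish_space \<Rightarrow> 'b::polish_space \<Rightarrow> 'a"
    and \<zeta> :: "int \<Rightarrow> 'w \<Rightarrow> 'b"
    and p L \<kappa> :: real and m :: nat and x0 :: 'a
  assumes M: "prob_space M"
    and filt_sub: "\<And>t. subalgebra M (Fl t)"
    and filt_mono: "\<And>s t. s \<le> t \<Longrightarrow> sets (Fl s) \<subseteq> sets (Fl t)"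
    and F_meas: "(\<lambda>(x, z). F x z) \<in> (borel \<Otimes>\<^sub>M borel) \<rightarrow>\<^sub>M borel"
    and adapted: "\<And>t. \<zeta> t \<in> Fl t \<rightarrow>\<^sub>M borel"
    and p: "p \<ge> 1" and L: "L > 0" and \<kappa>: "0 < \<kappa>" "\<kappa> < 1" and m: "m \<ge> 1"
    and A1: "(SUP t. \<integral>\<^sup>+ \<omega>. ennreal (dist (F x0 (\<zeta> t \<omega>)) x0 powr p) \<partial>M) < \<infinity>"
    and A2: "\<And>t. \<exists>K. reg_cond_distr M (Fl (t - 1)) (PiM {..<m} (\<lambda>_. borel))
                  (\<lambda>\<omega>. \<lambda>i\<in>{..<m}. \<zeta> (t + int i) \<omega>) K \<and>
               (AE \<omega> in M. \<forall>x y.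
                  (\<integral>\<^sup>+ z. ennreal (dist (F x (z 0)) (F y (z 0)) powr p) \<partial>K \<omega>)
                     \<le> ennreal (L powr p * dist x y powr p) \<and>
                  (\<integral>\<^sup>+ z. ennreal (dist (fiter F z m x) (fiter F z m y) powr p) \<partial>K \<omega>)
                     \<le> ennreal (\<kappa> powr p * dist x y powr p))"
begin

definition \<Phi> :: "int \<Rightarrow> nat \<Rightarrow> 'w \<Rightarrow> 'a \<Rightarrow> 'a" where
  "\<Phi> r n \<omega> x = fiter F (\<lambda>i. \<zeta> (r + int i) \<omega>) n x"

lemma Fcomp:
  assumes "f \<in> N \<rightarrow>\<^sub>M borel" "g \<in> N \<rightarrow>\<^sub>M borel"
  shows "(\<lambda>\<omega>. F (f \<omega>) (g \<omega>)) \<in> N \<rightarrow>\<^sub>M borel"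
proof -
  have "(\<lambda>\<omega>. (f \<omega>, g \<omega>)) \<in> N \<rightarrow>\<^sub>M borel \<Otimes>\<^sub>M borel" using assms by (rule measurable_Pair)
  from measurable_compose[OF this F_meas] show ?thesis by simp
qed

lemma lift: "s \<le> t \<Longrightarrow> f \<in> Fl s \<rightarrow>\<^sub>M N \<Longrightarrow> f \<in> Fl t \<rightarrow>\<^sub>M N"
proof -
  assume st: "s \<le> t" and f: "f \<in> Fl s \<rightarrow>\<^sub>M N"
  have "subalgebra (Fl t) (Fl s)"
    using filt_sub[of s] filt_sub[of t] filt_mono[OF st] unfolding subalgebra_def by auto
  then show ?thesis using measurable_from_subalg f by blast
qed

lemma toM: "f \<in> Fl s \<rightarrow>\<^sub>M N \<Longrightarrow> f \<in> M \<rightarrow>\<^sub>M N"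
  using measurable_from_subalg[OF filt_sub] by blast

lemma \<zeta>M: "\<zeta> t \<in> M \<rightarrow>\<^sub>M borel" using toM[OF adapted] .

lemma \<Phi>_meas:
  assumes U: "U \<in> Fl (r - 1) \<rightarrow>\<^sub>M borel"
  shows "(\<lambda>\<omega>. \<Phi> r n \<omega> (U \<omega>)) \<in> Fl (r + int n - 1) \<rightarrow>\<^sub>M borel"
proof (induct n)
  case 0 then show ?case using U by (simp add: \<Phi>_def)
next
  case (Suc n)
  have a: "(\<lambda>\<omega>. \<Phi> r n \<omega> (U \<omega>)) \<in> Fl (r + int (Suc n) - 1) \<rightarrow>\<^sub>M borel"
    by (rule lift[OF _ Suc]) simp
  have b: "\<zeta> (r + int n) \<in> Fl (r + int (Suc n) - 1) \<rightarrow>\<^sub>M borel"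
    using adapted[of "r + int n"] by simp
  show ?case using Fcomp[OF a b] by (simp add: \<Phi>_def)
qed

lemma \<Phi>_add: "\<Phi> r (a + b) \<omega> x = \<Phi> (r + int a) b \<omega> (\<Phi> r a \<omega> x)"
  unfolding \<Phi>_def by (simp add: fiter_add add.assoc)

lemma \<Phi>_1: "\<Phi> r 1 \<omega> x = F x (\<zeta> r \<omega>)"
  unfolding \<Phi>_def by simp

lemma kernel_steps:
  assumes U: "U \<in> Fl (t - 1) \<rightarrow>\<^sub>M borel" and V: "V \<in> Fl (t - 1) \<rightarrow>\<^sub>M borel"
  shows "(\<integral>\<^sup>+\<omega>. ennreal (dist (\<Phi> t 1 \<omega> (U \<omega>)) (\<Phi> t 1 \<omega> (V \<omega>)) powr p) \<partial>M)
           \<le> ennreal (L powr p) * (\<integral>\<^sup>+\<omega>. ennreal (dist (U \<omega>) (V \<omega>) powr p) \<partial>M)"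
    and "(\<integral>\<^sup>+\<omega>. ennreal (dist (\<Phi> t m \<omega> (U \<omega>)) (\<Phi> t m \<omega> (V \<omega>)) powr p) \<partial>M)
           \<le> ennreal (\<kappa> powr p) * (\<integral>\<^sup>+\<omega>. ennreal (dist (U \<omega>) (V \<omega>) powr p) \<partial>M)"
proof -
  let ?N = "PiM {..<m} (\<lambda>_. (borel :: 'b measure))"
  define Y where "Y = (\<lambda>\<omega>. \<lambda>i\<in>{..<m}. \<zeta> (t + int i) \<omega>)"
  obtain K where K: "reg_cond_distr M (Fl (t - 1)) ?N Y K"
    and AEK: "AE \<omega> in M. \<forall>x y.
                  (\<integral>\<^sup>+ z. ennreal (dist (F x (z 0)) (F y (z 0)) powr p) \<partial>K \<omega>)
                     \<le> ennreal (L powr p * dist x y powr p) \<and>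
                  (\<integral>\<^sup>+ z. ennreal (dist (fiter F z m x) (fiter F z m y) powr p) \<partial>K \<omega>)
                     \<le> ennreal (\<kappa> powr p * dist x y powr p)"
    using A2[of t] unfolding Y_def by blast
  have Ym: "Y \<in> M \<rightarrow>\<^sub>M ?N" unfolding Y_def using \<zeta>M by measurable
  have W: "(\<lambda>\<omega>. (U \<omega>, V \<omega>)) \<in> Fl (t - 1) \<rightarrow>\<^sub>M borel \<Otimes>\<^sub>M borel" using U V by (rule measurable_Pair)
  have UVM: "(\<lambda>\<omega>. ennreal (dist (U \<omega>) (V \<omega>) powr p)) \<in> borel_measurable M"
    using toM[OF U] toM[OF V] by measurable
  note D = disint[OF M filt_sub K Ym W]
  have m0: "0 < m" using m by simp
  have Y0: "\<And>\<omega>. Y \<omega> 0 = \<zeta> t \<omega>" unfolding Y_def using m0 by simp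
  have Yi: "\<And>\<omega> i. i < m \<Longrightarrow> Y \<omega> i = \<zeta> (t + int i) \<omega>" unfolding Y_def by simp
  have h1: "(\<lambda>w. ennreal (dist (F (fst (fst w)) (snd w 0)) (F (snd (fst w)) (snd w 0)) powr p))
       \<in> borel_measurable ((borel \<Otimes>\<^sub>M borel) \<Otimes>\<^sub>M ?N)"
  proof -
    have a: "(\<lambda>w. fiter F (snd w) 1 (fst (fst w))) \<in> (borel \<Otimes>\<^sub>M borel) \<Otimes>\<^sub>M ?N \<rightarrow>\<^sub>M (borel :: 'a measure)"
      by (rule fiter_meas_pi[OF F_meas _ m]) measurable
    have b: "(\<lambda>w. fiter F (snd w) 1 (snd (fst w))) \<in> (borel \<Otimes>\<^sub>M borel) \<Otimes>\<^sub>M ?N \<rightarrow>\<^sub>M (borel :: 'a measure)"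
      by (rule fiter_meas_pi[OF F_meas _ m]) measurable
    have a': "(\<lambda>w. F (fst (fst w)) (snd w 0)) \<in> (borel \<Otimes>\<^sub>M borel) \<Otimes>\<^sub>M ?N \<rightarrow>\<^sub>M (borel :: 'a measure)"
      using a by simp
    have b': "(\<lambda>w. F (snd (fst w)) (snd w 0)) \<in> (borel \<Otimes>\<^sub>M borel) \<Otimes>\<^sub>M ?N \<rightarrow>\<^sub>M (borel :: 'a measure)"
      using b by simp
    note [measurable] = a' b'
    show ?thesis by measurable
  qed
  show "(\<integral>\<^sup>+\<omega>. ennreal (dist (\<Phi> t 1 \<omega> (U \<omega>)) (\<Phi> t 1 \<omega> (V \<omega>)) powr p) \<partial>M)
           \<le> ennreal (L powr p) * (\<integral>\<^sup>+\<omega>. ennreal (dist (U \<omega>) (V \<omega>) powr p) \<partial>M)"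
  proof -
    have "(\<integral>\<^sup>+\<omega>. ennreal (dist (\<Phi> t 1 \<omega> (U \<omega>)) (\<Phi> t 1 \<omega> (V \<omega>)) powr p) \<partial>M)
        = (\<integral>\<^sup>+\<omega>. (\<lambda>w. ennreal (dist (F (fst (fst w)) (snd w 0)) (F (snd (fst w)) (snd w 0)) powr p)) ((U \<omega>, V \<omega>), Y \<omega>) \<partial>M)"
      by (simp add: \<Phi>_def Y0)
    also have "\<dots> = (\<integral>\<^sup>+\<omega>. (\<integral>\<^sup>+z. ennreal (dist (F (U \<omega>) (z 0)) (F (V \<omega>) (z 0)) powr p) \<partial>K \<omega>) \<partial>M)"
      using D[OF h1] by simp
    also have "\<dots> \<le> (\<integral>\<^sup>+\<omega>. ennreal (L powr p * dist (U \<omega>) (V \<omega>) powr p) \<partial>M)"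
      by (rule nn_integral_mono_AE) (use AEK in \<open>eventually_elim, blast\<close>)
    also have "\<dots> = ennreal (L powr p) * (\<integral>\<^sup>+\<omega>. ennreal (dist (U \<omega>) (V \<omega>) powr p) \<partial>M)"
      by (subst nn_integral_cmult[OF UVM, symmetric]) (simp add: ennreal_mult)
    finally show ?thesis .
  qed
  have h2: "(\<lambda>w. ennreal (dist (fiter F (snd w) m (fst (fst w))) (fiter F (snd w) m (snd (fst w))) powr p))
       \<in> borel_measurable ((borel \<Otimes>\<^sub>M borel) \<Otimes>\<^sub>M ?N)"
  proof -
    have a: "(\<lambda>w. fiter F (snd w) m (fst (fst w))) \<in> (borel \<Otimes>\<^sub>M borel) \<Otimes>\<^sub>M ?N \<rightarrow>\<^sub>M (borel :: 'a measure)"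
      by (rule fiter_meas_pi[OF F_meas _ order_refl]) measurable
    have b: "(\<lambda>w. fiter F (snd w) m (snd (fst w))) \<in> (borel \<Otimes>\<^sub>M borel) \<Otimes>\<^sub>M ?N \<rightarrow>\<^sub>M (borel :: 'a measure)"
      by (rule fiter_meas_pi[OF F_meas _ order_refl]) measurable
    note [measurable] = a b
    show ?thesis by measurable
  qed
  show "(\<integral>\<^sup>+\<omega>. ennreal (dist (\<Phi> t m \<omega> (U \<omega>)) (\<Phi> t m \<omega> (V \<omega>)) powr p) \<partial>M)
           \<le> ennreal (\<kappa> powr p) * (\<integral>\<^sup>+\<omega>. ennreal (dist (U \<omega>) (V \<omega>) powr p) \<partial>M)"
  proof -
    have e: "\<Phi> t m \<omega> x = fiter F (Y \<omega>) m x" for \<omega> x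
      unfolding \<Phi>_def by (rule fiter_cong) (simp add: Yi)
    have "(\<integral>\<^sup>+\<omega>. ennreal (dist (\<Phi> t m \<omega> (U \<omega>)) (\<Phi> t m \<omega> (V \<omega>)) powr p) \<partial>M)
        = (\<integral>\<^sup>+\<omega>. (\<lambda>w. ennreal (dist (fiter F (snd w) m (fst (fst w))) (fiter F (snd w) m (snd (fst w))) powr p)) ((U \<omega>, V \<omega>), Y \<omega>) \<partial>M)"
      by (simp add: e)
    also have "\<dots> = (\<integral>\<^sup>+\<omega>. (\<integral>\<^sup>+z. ennreal (dist (fiter F z m (U \<omega>)) (fiter F z m (V \<omega>)) powr p) \<partial>K \<omega>) \<partial>M)"
      using D[OF h2] by simp
    also have "\<dots> \<le> (\<integral>\<^sup>+\<omega>. ennreal (\<kappa> powr p * dist (U \<omega>) (V \<omega>) powr p) \<partial>M)"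
      by (rule nn_integral_mono_AE) (use AEK in \<open>eventually_elim, blast\<close>)
    also have "\<dots> = ennreal (\<kappa> powr p) * (\<integral>\<^sup>+\<omega>. ennreal (dist (U \<omega>) (V \<omega>) powr p) \<partial>M)"
      by (subst nn_integral_cmult[OF UVM, symmetric]) (simp add: ennreal_mult)
    finally show ?thesis .
  qed
qed

end

context th2 begin

abbreviation dp :: "'a \<Rightarrow> 'a \<Rightarrow> ennreal" where "dp x y \<equiv> ennreal (dist x y powr p)"

lemma iter_blocks:
  assumes "U \<in> Fl (r - 1) \<rightarrow>\<^sub>M borel" "V \<in> Fl (r - 1) \<rightarrow>\<^sub>M borel"
  shows "(\<integral>\<^sup>+\<omega>. dp (\<Phi> r (m*q) \<omega> (U \<omega>)) (\<Phi> r (m*q) \<omega> (V \<omega>)) \<partial>M)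
          \<le> ennreal (\<kappa> powr p) ^ q * (\<integral>\<^sup>+\<omega>. dp (U \<omega>) (V \<omega>) \<partial>M)"
  using assms
proof (induct q arbitrary: r U V)
  case 0 then show ?case by (simp add: \<Phi>_def)
next
  case (Suc q)
  define U' where "U' \<omega> = \<Phi> r m \<omega> (U \<omega>)" for \<omega>
  define V' where "V' \<omega> = \<Phi> r m \<omega> (V \<omega>)" for \<omega>
  have U': "U' \<in> Fl (r + int m - 1) \<rightarrow>\<^sub>M borel" unfolding U'_def by (rule \<Phi>_meas[OF Suc(2)])
  have V': "V' \<in> Fl (r + int m - 1) \<rightarrow>\<^sub>M borel" unfolding V'_def by (rule \<Phi>_meas[OF Suc(3)])
  have e: "\<Phi> r (m + m * q) \<omega> x = \<Phi> (r + int m) (m*q) \<omega> (\<Phi> r m \<omega> x)" for \<omega> x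
    by (rule \<Phi>_add)
  have "(\<integral>\<^sup>+\<omega>. dp (\<Phi> r (m * Suc q) \<omega> (U \<omega>)) (\<Phi> r (m * Suc q) \<omega> (V \<omega>)) \<partial>M)
      = (\<integral>\<^sup>+\<omega>. dp (\<Phi> (r + int m) (m*q) \<omega> (U' \<omega>)) (\<Phi> (r + int m) (m*q) \<omega> (V' \<omega>)) \<partial>M)"
    by (simp add: e U'_def V'_def)
  also have "\<dots> \<le> ennreal (\<kappa> powr p) ^ q * (\<integral>\<^sup>+\<omega>. dp (U' \<omega>) (V' \<omega>) \<partial>M)"
    by (rule Suc(1)) (use U' V' in \<open>simp_all add: algebra_simps\<close>)
  also have "\<dots> \<le> ennreal (\<kappa> powr p) ^ q * (ennreal (\<kappa> powr p) * (\<integral>\<^sup>+\<omega>. dp (U \<omega>) (V \<omega>) \<partial>M))"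
    unfolding U'_def V'_def by (intro mult_left_mono kernel_steps(2) Suc(2,3)) simp
  finally show ?case by (simp add: mult_ac)
qed

lemma iter_singles:
  assumes "U \<in> Fl (r - 1) \<rightarrow>\<^sub>M borel" "V \<in> Fl (r - 1) \<rightarrow>\<^sub>M borel"
  shows "(\<integral>\<^sup>+\<omega>. dp (\<Phi> r j \<omega> (U \<omega>)) (\<Phi> r j \<omega> (V \<omega>)) \<partial>M)
          \<le> ennreal (L powr p) ^ j * (\<integral>\<^sup>+\<omega>. dp (U \<omega>) (V \<omega>) \<partial>M)"
  using assms
proof (induct j arbitrary: r U V)
  case 0 then show ?case by (simp add: \<Phi>_def)
next
  case (Suc j)
  define U' where "U' \<omega> = \<Phi> r 1 \<omega> (U \<omega>)" for \<omega>
  define V' where "V' \<omega> = \<Phi> r 1 \<omega> (V \<omega>)" for \<omega>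
  have U': "U' \<in> Fl (r + int 1 - 1) \<rightarrow>\<^sub>M borel" unfolding U'_def by (rule \<Phi>_meas[OF Suc(2)])
  have V': "V' \<in> Fl (r + int 1 - 1) \<rightarrow>\<^sub>M borel" unfolding V'_def by (rule \<Phi>_meas[OF Suc(3)])
  have e: "\<Phi> r (Suc j) \<omega> x = \<Phi> (r + 1) j \<omega> (\<Phi> r 1 \<omega> x)" for \<omega> x
    using \<Phi>_add[of r 1 j] by simp
  have "(\<integral>\<^sup>+\<omega>. dp (\<Phi> r (Suc j) \<omega> (U \<omega>)) (\<Phi> r (Suc j) \<omega> (V \<omega>)) \<partial>M)
      = (\<integral>\<^sup>+\<omega>. dp (\<Phi> (r + 1) j \<omega> (U' \<omega>)) (\<Phi> (r + 1) j \<omega> (V' \<omega>)) \<partial>M)"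
    by (simp add: e U'_def V'_def)
  also have "\<dots> \<le> ennreal (L powr p) ^ j * (\<integral>\<^sup>+\<omega>. dp (U' \<omega>) (V' \<omega>) \<partial>M)"
    by (rule Suc(1)) (use U' V' in \<open>simp_all add: algebra_simps\<close>)
  also have "\<dots> \<le> ennreal (L powr p) ^ j * (ennreal (L powr p) * (\<integral>\<^sup>+\<omega>. dp (U \<omega>) (V \<omega>) \<partial>M))"
    unfolding U'_def V'_def by (intro mult_left_mono kernel_steps(1) Suc(2,3)) simp
  finally show ?case by (simp add: mult_ac)
qed

definition \<rho> :: real where "\<rho> = \<kappa> powr (p / m)"
definition Bc :: real where "Bc = (max 1 (L powr p)) ^ m / \<kappa> powr p"

lemma \<rho>_facts: "0 < \<rho>" "\<rho> < 1" "Bc > 0"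
proof -
  show "0 < \<rho>" unfolding \<rho>_def using \<kappa> by simp
  have e: "p / m > 0" using p m by simp
  have "\<kappa> powr (p/m) < 1 powr (p/m)" by (rule powr_less_mono2[OF e]) (use \<kappa> in auto)
  then show "\<rho> < 1" unfolding \<rho>_def by simp
  show "Bc > 0" unfolding Bc_def using \<kappa> by simp
qed

lemma const_bound: "(L powr p) ^ (n mod m) * (\<kappa> powr p) ^ (n div m) \<le> Bc * \<rho> ^ n"
proof -
  define q where "q = n div m"
  define j where "j = n mod m"
  have n: "n = m * q + j" unfolding q_def j_def by simp
  have jm: "j \<le> m" unfolding j_def using m by (simp add: less_imp_le)
  have m0: "real m > 0" using m by simp
  have "(L powr p) ^ j \<le> (max 1 (L powr p)) ^ j" by (rule power_mono) auto
  also have "\<dots> \<le> (max 1 (L powr p)) ^ m" by (rule power_increasing[OF jm]) simp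
  finally have l: "(L powr p) ^ j \<le> (max 1 (L powr p)) ^ m" .
  have "(\<kappa> powr p) ^ q = \<kappa> powr (p * q)"
    using \<kappa> by (simp add: powr_power mult.commute)
  also have "\<dots> \<le> \<kappa> powr (p * n / m - p)"
  proof (rule powr_mono')
    have jlt: "real j < real m" unfolding j_def using m by simp
    have rn: "real n = real m * q + j" using n by simp
    have "real n / m = q + j / m" using m0 by (simp add: rn field_simps)
    moreover have "real j / m < 1" using m0 jlt by simp
    ultimately have "real n / m < q + 1" by simp
    then have "p * (real n / m) \<le> p * (q + 1)" using p by (intro mult_left_mono) auto
    then show "p * n / m - p \<le> p * q" by (simp add: algebra_simps)
  qed (use \<kappa> in auto)
  also have "\<dots> = \<rho> ^ n / \<kappa> powr p"
    unfolding \<rho>_def using \<kappa> by (simp add: powr_diff powr_power mult.commute)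
  finally have k: "(\<kappa> powr p) ^ q \<le> \<rho> ^ n / \<kappa> powr p" .
  have "(L powr p) ^ j * (\<kappa> powr p) ^ q \<le> (max 1 (L powr p)) ^ m * (\<rho> ^ n / \<kappa> powr p)"
    by (rule mult_mono[OF l k]) auto
  then show ?thesis unfolding Bc_def q_def j_def by (simp add: field_simps)
qed

lemma iter_all:
  assumes U: "U \<in> Fl (r - 1) \<rightarrow>\<^sub>M borel" and V: "V \<in> Fl (r - 1) \<rightarrow>\<^sub>M borel"
  shows "(\<integral>\<^sup>+\<omega>. dp (\<Phi> r n \<omega> (U \<omega>)) (\<Phi> r n \<omega> (V \<omega>)) \<partial>M)
          \<le> ennreal (Bc * \<rho> ^ n) * (\<integral>\<^sup>+\<omega>. dp (U \<omega>) (V \<omega>) \<partial>M)"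
proof -
  define q where "q = n div m"
  define j where "j = n mod m"
  have n: "n = m * q + j" unfolding q_def j_def by simp
  define U' where "U' \<omega> = \<Phi> r (m*q) \<omega> (U \<omega>)" for \<omega>
  define V' where "V' \<omega> = \<Phi> r (m*q) \<omega> (V \<omega>)" for \<omega>
  have U': "U' \<in> Fl (r + int (m*q) - 1) \<rightarrow>\<^sub>M borel" unfolding U'_def by (rule \<Phi>_meas[OF U])
  have V': "V' \<in> Fl (r + int (m*q) - 1) \<rightarrow>\<^sub>M borel" unfolding V'_def by (rule \<Phi>_meas[OF V])
  have "(\<integral>\<^sup>+\<omega>. dp (\<Phi> r n \<omega> (U \<omega>)) (\<Phi> r n \<omega> (V \<omega>)) \<partial>M)
      = (\<integral>\<^sup>+\<omega>. dp (\<Phi> (r + int (m*q)) j \<omega> (U' \<omega>)) (\<Phi> (r + int (m*q)) j \<omega> (V' \<omega>)) \<partial>M)"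
    unfolding n U'_def V'_def by (simp add: \<Phi>_add)
  also have "\<dots> \<le> ennreal (L powr p) ^ j * (\<integral>\<^sup>+\<omega>. dp (U' \<omega>) (V' \<omega>) \<partial>M)"
    by (rule iter_singles) (use U' V' in simp_all)
  also have "\<dots> \<le> ennreal (L powr p) ^ j * (ennreal (\<kappa> powr p) ^ q * (\<integral>\<^sup>+\<omega>. dp (U \<omega>) (V \<omega>) \<partial>M))"
    unfolding U'_def V'_def by (intro mult_left_mono iter_blocks U V) simp
  also have "\<dots> = ennreal ((L powr p) ^ j * (\<kappa> powr p) ^ q) * (\<integral>\<^sup>+\<omega>. dp (U \<omega>) (V \<omega>) \<partial>M)"
    by (simp add: ennreal_power ennreal_mult mult.assoc)
  also have "\<dots> \<le> ennreal (Bc * \<rho> ^ n) * (\<integral>\<^sup>+\<omega>. dp (U \<omega>) (V \<omega>) \<partial>M)"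
    using const_bound[of n] unfolding q_def j_def by (intro mult_right_mono ennreal_leI) auto
  finally show ?thesis .
qed

end

context th2 begin

definition S0 :: real where "S0 = enn2real (SUP t. \<integral>\<^sup>+ \<omega>. ennreal (dist (F x0 (\<zeta> t \<omega>)) x0 powr p) \<partial>M)"
definition Dx :: "'a \<Rightarrow> real" where
  "Dx x = 3 powr (p-1) * (dist x x0 powr p + S0 + L powr p * dist x0 x powr p)"

lemma S0: "(SUP t. \<integral>\<^sup>+ \<omega>. ennreal (dist (F x0 (\<zeta> t \<omega>)) x0 powr p) \<partial>M) = ennreal S0" "S0 \<ge> 0"
  using A1 unfolding S0_def by (auto simp: ennreal_enn2real less_top)

lemma Dx_nonneg: "Dx x \<ge> 0" unfolding Dx_def using S0(2) by simp

lemma nn_const: "(\<integral>\<^sup>+\<omega>. ennreal c \<partial>M) = ennreal c"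
  using prob_space.emeasure_space_1[OF M] by simp

lemma disp: "(\<integral>\<^sup>+\<omega>. dp x (F x (\<zeta> r \<omega>)) \<partial>M) \<le> ennreal (Dx x)"
proof -
  define c3 where "c3 = (3::real) powr (p-1)"
  have c3: "c3 \<ge> 0" unfolding c3_def by simp
  have m1[measurable]: "(\<lambda>\<omega>. F x0 (\<zeta> r \<omega>)) \<in> borel_measurable M" by (rule Fcomp) (simp_all add: \<zeta>M)
  have m2[measurable]: "(\<lambda>\<omega>. F x (\<zeta> r \<omega>)) \<in> borel_measurable M" by (rule Fcomp) (simp_all add: \<zeta>M)
  have pw: "dp x (F x (\<zeta> r \<omega>)) \<le> ennreal (c3 * dist x x0 powr p) + ennreal (c3 * dist (F x0 (\<zeta> r \<omega>)) x0 powr p)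
       + ennreal (c3 * dist (F x0 (\<zeta> r \<omega>)) (F x (\<zeta> r \<omega>)) powr p)" for \<omega>
  proof -
    let ?z = "\<zeta> r \<omega>"
    have "dist x (F x ?z) \<le> dist x x0 + dist (F x0 ?z) x0 + dist (F x0 ?z) (F x ?z)"
      using dist_triangle[of x "F x ?z" "F x0 ?z"] dist_triangle[of x "F x0 ?z" x0] dist_commute[of x0 "F x0 ?z"]
      by linarith
    then have "dist x (F x ?z) powr p \<le> (dist x x0 + dist (F x0 ?z) x0 + dist (F x0 ?z) (F x ?z)) powr p"
      using p by (intro powr_mono2) auto
    also have "\<dots> \<le> c3 * (dist x x0 powr p + dist (F x0 ?z) x0 powr p + dist (F x0 ?z) (F x ?z) powr p)"
      unfolding c3_def by (rule tri3) (use p in auto)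
    finally have "dist x (F x ?z) powr p \<le> c3 * dist x x0 powr p + c3 * dist (F x0 ?z) x0 powr p
        + c3 * dist (F x0 ?z) (F x ?z) powr p" by (simp add: algebra_simps)
    then show ?thesis using c3 by (simp add: ennreal_plus[symmetric] del: ennreal_plus)
  qed
  have "(\<integral>\<^sup>+\<omega>. dp x (F x (\<zeta> r \<omega>)) \<partial>M) \<le> (\<integral>\<^sup>+\<omega>. ennreal (c3 * dist x x0 powr p) + ennreal (c3 * dist (F x0 (\<zeta> r \<omega>)) x0 powr p)
       + ennreal (c3 * dist (F x0 (\<zeta> r \<omega>)) (F x (\<zeta> r \<omega>)) powr p) \<partial>M)"
    by (rule nn_integral_mono) (rule pw)
  also have "\<dots> = ennreal (c3 * dist x x0 powr p) + (\<integral>\<^sup>+\<omega>. ennreal (c3 * dist (F x0 (\<zeta> r \<omega>)) x0 powr p) \<partial>M)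
       + (\<integral>\<^sup>+\<omega>. ennreal (c3 * dist (F x0 (\<zeta> r \<omega>)) (F x (\<zeta> r \<omega>)) powr p) \<partial>M)"
    using prob_space.emeasure_space_1[OF M] by (simp add: nn_integral_add)
  also have "(\<integral>\<^sup>+\<omega>. ennreal (c3 * dist (F x0 (\<zeta> r \<omega>)) x0 powr p) \<partial>M) \<le> ennreal c3 * ennreal S0"
  proof -
    have "(\<integral>\<^sup>+\<omega>. ennreal (c3 * dist (F x0 (\<zeta> r \<omega>)) x0 powr p) \<partial>M) = ennreal c3 * (\<integral>\<^sup>+\<omega>. ennreal (dist (F x0 (\<zeta> r \<omega>)) x0 powr p) \<partial>M)"
      using c3 by (subst nn_integral_cmult[symmetric]) (measurable, simp add: ennreal_mult)
    also have "\<dots> \<le> ennreal c3 * ennreal S0"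
      using S0(1) by (intro mult_left_mono) (metis SUP_upper UNIV_I, simp)
    finally show ?thesis .
  qed
  also have "(\<integral>\<^sup>+\<omega>. ennreal (c3 * dist (F x0 (\<zeta> r \<omega>)) (F x (\<zeta> r \<omega>)) powr p) \<partial>M)
      \<le> ennreal c3 * (ennreal (L powr p) * ennreal (dist x0 x powr p))"
  proof -
    have "(\<integral>\<^sup>+\<omega>. ennreal (c3 * dist (F x0 (\<zeta> r \<omega>)) (F x (\<zeta> r \<omega>)) powr p) \<partial>M)
        = ennreal c3 * (\<integral>\<^sup>+\<omega>. dp (\<Phi> r 1 \<omega> ((\<lambda>_. x0) \<omega>)) (\<Phi> r 1 \<omega> ((\<lambda>_. x) \<omega>)) \<partial>M)"
      using c3 unfolding \<Phi>_1 by (subst nn_integral_cmult[symmetric]) (measurable, simp add: ennreal_mult)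
    also have "\<dots> \<le> ennreal c3 * (ennreal (L powr p) * (\<integral>\<^sup>+\<omega>. dp ((\<lambda>_. x0) \<omega>) ((\<lambda>_. x) \<omega>) \<partial>M))"
      by (intro mult_left_mono kernel_steps(1)) simp_all
    finally show ?thesis using prob_space.emeasure_space_1[OF M] by simp
  qed
  also have "ennreal (c3 * dist x x0 powr p) + ennreal c3 * ennreal S0 + ennreal c3 * (ennreal (L powr p) * ennreal (dist x0 x powr p))
      = ennreal (c3 * dist x x0 powr p + c3 * S0 + c3 * (L powr p * dist x0 x powr p))"
    using c3 S0(2) by (simp add: ennreal_mult)
  also have "\<dots> = ennreal (Dx x)" unfolding Dx_def c3_def by (simp add: algebra_simps)
  finally show ?thesis by simp
qed

definition aseq :: "'a \<Rightarrow> int \<Rightarrow> nat \<Rightarrow> 'w \<Rightarrow> 'a" where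
  "aseq x t s \<omega> = \<Phi> (t - int s) (Suc s) \<omega> x"

lemma aseq_meas: "aseq x t s \<in> borel_measurable M"
proof -
  have U: "(\<lambda>_. x) \<in> Fl (t - int s - 1) \<rightarrow>\<^sub>M borel" by simp
  show ?thesis unfolding aseq_def by (rule toM[OF \<Phi>_meas[OF U]])
qed

lemma aseq_Suc: "aseq x t (Suc s) \<omega> = \<Phi> (t - int s) (Suc s) \<omega> (F x (\<zeta> (t - int s - 1) \<omega>))"
proof -
  have "aseq x t (Suc s) \<omega> = \<Phi> (t - int (Suc s)) (1 + Suc s) \<omega> x" unfolding aseq_def by simp
  also have "\<dots> = \<Phi> (t - int (Suc s) + 1) (Suc s) \<omega> (\<Phi> (t - int (Suc s)) 1 \<omega> x)"
    by (simp only: \<Phi>_add of_nat_1)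
  also have "\<dots> = \<Phi> (t - int s) (Suc s) \<omega> (F x (\<zeta> (t - int s - 1) \<omega>))"
    by (simp only: \<Phi>_1) (simp add: algebra_simps)
  finally show ?thesis .
qed

lemma aseq_bound: "(\<integral>\<^sup>+\<omega>. dp (aseq x t s \<omega>) (aseq x t (Suc s) \<omega>) \<partial>M) \<le> ennreal (Bc * Dx x * \<rho> ^ s)"
proof -
  define r where "r = t - int s"
  have V: "(\<lambda>\<omega>. F x (\<zeta> (r - 1) \<omega>)) \<in> Fl (r - 1) \<rightarrow>\<^sub>M borel" by (rule Fcomp) (simp_all add: adapted)
  have "(\<integral>\<^sup>+\<omega>. dp (aseq x t s \<omega>) (aseq x t (Suc s) \<omega>) \<partial>M)
     = (\<integral>\<^sup>+\<omega>. dp (\<Phi> r (Suc s) \<omega> ((\<lambda>_. x) \<omega>)) (\<Phi> r (Suc s) \<omega> (F x (\<zeta> (r - 1) \<omega>))) \<partial>M)"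
    unfolding aseq_Suc by (simp add: aseq_def r_def)
  also have "\<dots> \<le> ennreal (Bc * \<rho> ^ Suc s) * (\<integral>\<^sup>+\<omega>. dp x (F x (\<zeta> (r - 1) \<omega>)) \<partial>M)"
  proof -
    have U: "(\<lambda>_. x) \<in> Fl (r - 1) \<rightarrow>\<^sub>M borel" by simp
    show ?thesis by (rule iter_all[OF U V])
  qed
  also have "\<dots> \<le> ennreal (Bc * \<rho> ^ Suc s) * ennreal (Dx x)" by (intro mult_left_mono disp) simp
  also have "\<dots> \<le> ennreal (Bc * Dx x * \<rho> ^ s)"
  proof -
    have "Bc * \<rho> ^ Suc s * Dx x \<le> Bc * Dx x * \<rho> ^ s"
      using \<rho>_facts Dx_nonneg[of x] by (simp add: mult_left_le_one_le mult_ac mult_right_le_one_le)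
    then show ?thesis using \<rho>_facts Dx_nonneg[of x] by (simp add: ennreal_mult[symmetric] ennreal_leI)
  qed
  finally show ?thesis .
qed

end

definition Aseq :: "('a \<Rightarrow> 'b \<Rightarrow> 'a) \<Rightarrow> 'a \<Rightarrow> (int \<Rightarrow> 'b) \<Rightarrow> nat \<Rightarrow> 'a" where
  "Aseq F x w s = fiter F (\<lambda>i. w (- int s + int i)) (Suc s) x"

definition gx :: "('a \<Rightarrow> 'b \<Rightarrow> 'a) \<Rightarrow> 'a::t2_space \<Rightarrow> (int \<Rightarrow> 'b) \<Rightarrow> 'a" where
  "gx F x w = (if convergent (Aseq F x w) then lim (Aseq F x w) else x)"

context th2 begin

definition Xf :: "'a \<Rightarrow> int \<Rightarrow> 'w \<Rightarrow> 'a" where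
  "Xf x t \<omega> = gx F x (\<lambda>k. \<zeta> (t + k) \<omega>)"

lemma fiter_path_meas: "(\<lambda>w. fiter F (\<lambda>i. w (c + int i)) n x) \<in> (path_space :: (int \<Rightarrow> 'b) measure) \<rightarrow>\<^sub>M borel"
proof (induct n)
  case 0 then show ?case by simp
next
  case (Suc n)
  show ?case using Fcomp[OF Suc measurable_path_comp] by simp
qed

lemma gx_meas: "gx F x \<in> (path_space :: (int \<Rightarrow> 'b) measure) \<rightarrow>\<^sub>M borel"
proof -
  have Am[measurable]: "\<And>s. (\<lambda>w. Aseq F x w s) \<in> (path_space :: (int \<Rightarrow> 'b) measure) \<rightarrow>\<^sub>M borel"
    unfolding Aseq_def by (rule fiter_path_meas)
  have C[measurable]: "Measurable.pred (path_space :: (int \<Rightarrow> 'b) measure) (\<lambda>w. convergent (\<lambda>s. Aseq F x w s))"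
    by (rule convergent_set_measurable) (rule Am)
  show ?thesis
  proof (rule borel_measurable_LIMSEQ_metric[where f="\<lambda>s w. if convergent (\<lambda>s. Aseq F x w s) then Aseq F x w s else x"])
    show "\<And>s. (\<lambda>w. if convergent (\<lambda>s. Aseq F x w s) then Aseq F x w s else x) \<in> borel_measurable path_space"
      by measurable
    fix w
    show "(\<lambda>s. if convergent (\<lambda>s. Aseq F x w s) then Aseq F x w s else x) \<longlonglongrightarrow> gx F x w"
      unfolding gx_def by (cases "convergent (Aseq F x w)") (auto simp: convergent_LIMSEQ_iff[symmetric])
  qed
qed

lemma path_meas: "(\<lambda>\<omega> k. \<zeta> (t + k) \<omega>) \<in> M \<rightarrow>\<^sub>M path_space"
  by (rule measurable_path_spaceI) (rule \<zeta>M)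

lemma Xf_meas: "Xf x t \<in> borel_measurable M"
  unfolding Xf_def using measurable_compose[OF path_meas gx_meas] by simp

lemma Aseq_aseq: "Aseq F x (\<lambda>k. \<zeta> (t + k) \<omega>) s = aseq x t s \<omega>"
  unfolding Aseq_def aseq_def \<Phi>_def by (simp add: algebra_simps)

lemma aseq_conv: "AE \<omega> in M. (\<lambda>s. aseq x t s \<omega>) \<longlonglongrightarrow> Xf x t \<omega>"
proof -
  have "AE \<omega> in M. convergent (\<lambda>s. aseq x t s \<omega>)"
    by (rule series_conv(1)[OF aseq_meas p \<rho>_facts(1,2) _ aseq_bound])
       (use \<rho>_facts(3) Dx_nonneg[of x] in simp)
  then show ?thesis
  proof eventually_elim
    case (elim \<omega>)
    have e: "Aseq F x (\<lambda>k. \<zeta> (t + k) \<omega>) = (\<lambda>s. aseq x t s \<omega>)" by (rule ext) (rule Aseq_aseq)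
    show ?case using elim unfolding Xf_def gx_def e by (simp add: convergent_LIMSEQ_iff)
  qed
qed

lemma aseq_rate: "(\<integral>\<^sup>+\<omega>. dp (aseq x t s \<omega>) (Xf x t \<omega>) \<partial>M) \<le> ennreal (Cr \<rho> p * (Bc * Dx x) * \<rho>^s)"
  by (rule series_conv(2)[OF aseq_meas p \<rho>_facts(1,2) _ aseq_bound aseq_conv])
     (use \<rho>_facts(3) Dx_nonneg[of x] in simp)

end

context th2 begin

lemma tri_int:
  assumes [measurable]: "f \<in> borel_measurable M" "g \<in> borel_measurable M" "h \<in> borel_measurable M" "k \<in> borel_measurable M"
  shows "(\<integral>\<^sup>+\<omega>. dp (f \<omega>) (k \<omega>) \<partial>M) \<le> ennreal (3 powr (p-1)) *
     ((\<integral>\<^sup>+\<omega>. dp (f \<omega>) (g \<omega>) \<partial>M) + (\<integral>\<^sup>+\<omega>. dp (g \<omega>) (h \<omega>) \<partial>M) + (\<integral>\<^sup>+\<omega>. dp (h \<omega>) (k \<omega>) \<partial>M))"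
proof -
  define c3 where "c3 = (3::real) powr (p-1)"
  have c3: "c3 \<ge> 0" unfolding c3_def by simp
  have pw: "dp (f \<omega>) (k \<omega>) \<le> ennreal c3 * (dp (f \<omega>) (g \<omega>) + dp (g \<omega>) (h \<omega>) + dp (h \<omega>) (k \<omega>))" for \<omega>
  proof -
    have "dist (f \<omega>) (k \<omega>) \<le> dist (f \<omega>) (g \<omega>) + dist (g \<omega>) (h \<omega>) + dist (h \<omega>) (k \<omega>)"
      using dist_triangle[of "f \<omega>" "k \<omega>" "g \<omega>"] dist_triangle[of "g \<omega>" "k \<omega>" "h \<omega>"] by linarith
    then have "dist (f \<omega>) (k \<omega>) powr p \<le> (dist (f \<omega>) (g \<omega>) + dist (g \<omega>) (h \<omega>) + dist (h \<omega>) (k \<omega>)) powr p"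
      using p by (intro powr_mono2) auto
    also have "\<dots> \<le> c3 * (dist (f \<omega>) (g \<omega>) powr p + dist (g \<omega>) (h \<omega>) powr p + dist (h \<omega>) (k \<omega>) powr p)"
      unfolding c3_def by (rule tri3) (use p in auto)
    finally have "ennreal (dist (f \<omega>) (k \<omega>) powr p) \<le> ennreal (c3 * (dist (f \<omega>) (g \<omega>) powr p + dist (g \<omega>) (h \<omega>) powr p + dist (h \<omega>) (k \<omega>) powr p))"
      by (rule ennreal_leI)
    then show ?thesis using c3 by (simp add: ennreal_mult)
  qed
  have "(\<integral>\<^sup>+\<omega>. dp (f \<omega>) (k \<omega>) \<partial>M) \<le> (\<integral>\<^sup>+\<omega>. ennreal c3 * (dp (f \<omega>) (g \<omega>) + dp (g \<omega>) (h \<omega>) + dp (h \<omega>) (k \<omega>)) \<partial>M)"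
    by (rule nn_integral_mono) (rule pw)
  also have "\<dots> = ennreal c3 * ((\<integral>\<^sup>+\<omega>. dp (f \<omega>) (g \<omega>) \<partial>M) + (\<integral>\<^sup>+\<omega>. dp (g \<omega>) (h \<omega>) \<partial>M) + (\<integral>\<^sup>+\<omega>. dp (h \<omega>) (k \<omega>) \<partial>M))"
    by (subst nn_integral_cmult) (simp_all add: nn_integral_add)
  finally show ?thesis unfolding c3_def .
qed

definition Kx :: "'a \<Rightarrow> real" where
  "Kx x = 3 powr (p-1) * (Cr \<rho> p * (Bc * Dx x) + Dx x + dist x x0 powr p)"

lemma Xf_moment: "(\<integral>\<^sup>+\<omega>. dp (Xf x t \<omega>) x0 \<partial>M) \<le> ennreal (Kx x)"
proof -
  have a0: "aseq x t 0 \<omega> = F x (\<zeta> t \<omega>)" for \<omega> unfolding aseq_def \<Phi>_def by simp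
  have [measurable]: "Xf x t \<in> borel_measurable M" "aseq x t 0 \<in> borel_measurable M" by (rule Xf_meas, rule aseq_meas)
  have "(\<integral>\<^sup>+\<omega>. dp (Xf x t \<omega>) ((\<lambda>_. x0) \<omega>) \<partial>M) \<le> ennreal (3 powr (p-1)) *
     ((\<integral>\<^sup>+\<omega>. dp (Xf x t \<omega>) (aseq x t 0 \<omega>) \<partial>M) + (\<integral>\<^sup>+\<omega>. dp (aseq x t 0 \<omega>) ((\<lambda>_. x) \<omega>) \<partial>M) + (\<integral>\<^sup>+\<omega>. dp ((\<lambda>_. x) \<omega>) ((\<lambda>_. x0) \<omega>) \<partial>M))"
    by (rule tri_int) simp_all
  also have "\<dots> \<le> ennreal (3 powr (p-1)) * (ennreal (Cr \<rho> p * (Bc * Dx x)) + ennreal (Dx x) + ennreal (dist x x0 powr p))"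
  proof (intro mult_left_mono add_mono)
    show "(\<integral>\<^sup>+\<omega>. dp (Xf x t \<omega>) (aseq x t 0 \<omega>) \<partial>M) \<le> ennreal (Cr \<rho> p * (Bc * Dx x))"
      using aseq_rate[of x t 0] by (simp add: dist_commute)
    show "(\<integral>\<^sup>+\<omega>. dp (aseq x t 0 \<omega>) ((\<lambda>_. x) \<omega>) \<partial>M) \<le> ennreal (Dx x)"
      using disp[of x t] by (simp add: a0 dist_commute)
    show "(\<integral>\<^sup>+\<omega>. dp ((\<lambda>_. x) \<omega>) ((\<lambda>_. x0) \<omega>) \<partial>M) \<le> ennreal (dist x x0 powr p)"
      using prob_space.emeasure_space_1[OF M] by simp
  qed simp
  also have "\<dots> = ennreal (Kx x)"
    unfolding Kx_def using Cr_def sig_tau_facts(5)[OF p \<rho>_facts(1,2)] \<rho>_facts(3) Dx_nonneg[of x]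
    by (simp add: ennreal_mult)
  finally show ?thesis by simp
qed

lemma part2: "AE \<omega> in M. Xf x t \<omega> = Xf y t \<omega>"
proof -
  have bnd: "(\<integral>\<^sup>+\<omega>. dp (aseq x t s \<omega>) (aseq y t s \<omega>) \<partial>M) \<le> ennreal (Bc * dist x y powr p * \<rho>^s)" for s
  proof -
    define r where "r = t - int s"
    have U: "(\<lambda>_. x) \<in> Fl (r - 1) \<rightarrow>\<^sub>M borel" "(\<lambda>_. y) \<in> Fl (r - 1) \<rightarrow>\<^sub>M borel" by simp_all
    have "(\<integral>\<^sup>+\<omega>. dp (aseq x t s \<omega>) (aseq y t s \<omega>) \<partial>M)
        = (\<integral>\<^sup>+\<omega>. dp (\<Phi> r (Suc s) \<omega> ((\<lambda>_. x) \<omega>)) (\<Phi> r (Suc s) \<omega> ((\<lambda>_. y) \<omega>)) \<partial>M)"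
      by (simp add: aseq_def r_def)
    also have "\<dots> \<le> ennreal (Bc * \<rho> ^ Suc s) * (\<integral>\<^sup>+\<omega>. dp ((\<lambda>_. x) \<omega>) ((\<lambda>_. y) \<omega>) \<partial>M)"
      by (rule iter_all[OF U])
    also have "\<dots> = ennreal (Bc * \<rho> ^ Suc s * dist x y powr p)"
      using \<rho>_facts prob_space.emeasure_space_1[OF M] by (simp add: ennreal_mult)
    also have "\<dots> \<le> ennreal (Bc * dist x y powr p * \<rho>^s)"
    proof (rule ennreal_leI)
      have "Bc * dist x y powr p * (\<rho> * \<rho>^s) \<le> Bc * dist x y powr p * (1 * \<rho>^s)"
        using \<rho>_facts by (intro mult_left_mono mult_right_mono) auto
      then show "Bc * \<rho> ^ Suc s * dist x y powr p \<le> Bc * dist x y powr p * \<rho>^s" by (simp add: mult_ac)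
    qed
    finally show ?thesis .
  qed
  have "AE \<omega> in M. (\<lambda>s. dist (aseq x t s \<omega>) (aseq y t s \<omega>)) \<longlonglongrightarrow> 0"
    by (rule ae_dist_to_0[OF aseq_meas aseq_meas _ \<rho>_facts(1,2) _ bnd]) (use p \<rho>_facts(3) in auto)
  with aseq_conv[of x t] aseq_conv[of y t] show ?thesis
  proof eventually_elim
    case (elim \<omega>)
    have "(\<lambda>s. dist (aseq x t s \<omega>) (aseq y t s \<omega>)) \<longlonglongrightarrow> dist (Xf x t \<omega>) (Xf y t \<omega>)"
      using elim by (intro tendsto_dist) auto
    then have "dist (Xf x t \<omega>) (Xf y t \<omega>) = 0" using elim(3) by (rule LIMSEQ_unique)
    then show ?case by simp
  qed
qed

end

context th2 begin

lemma iter_rec: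
  assumes "\<forall>t. Y t \<omega> = F (Y (t - 1) \<omega>) (\<zeta> t \<omega>)"
  shows "Y (r + int n - 1) \<omega> = \<Phi> r n \<omega> (Y (r - 1) \<omega>)"
proof (induction n)
  case 0 show ?case by (simp add: \<Phi>_def)
next
  case (Suc n)
  have e1: "r + int (Suc n) - 1 = r + int n" by simp
  have "Y (r + int (Suc n) - 1) \<omega> = F (Y (r + int n - 1) \<omega>) (\<zeta> (r + int n) \<omega>)"
    unfolding e1 using assms by blast
  also have "\<dots> = F (\<Phi> r n \<omega> (Y (r - 1) \<omega>)) (\<zeta> (r + int n) \<omega>)" using Suc.IH by (rule arg_cong)
  also have "\<dots> = \<Phi> r (Suc n) \<omega> (Y (r - 1) \<omega>)" unfolding \<Phi>_def by simp
  finally show ?case .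
qed

lemma part4:
  assumes Ym: "\<forall>t. Y t \<in> Fl t \<rightarrow>\<^sub>M borel" and rec: "\<forall>t. AE \<omega> in M. Y t \<omega> = F (Y (t - 1) \<omega>) (\<zeta> t \<omega>)"
    and mom: "(SUP j. \<integral>\<^sup>+ \<omega>. ennreal (dist (Y j \<omega>) x0 powr p) \<partial>M) < \<infinity>"
  shows "AE \<omega> in M. Y t \<omega> = Xf x t \<omega>"
proof -
  define SY where "SY = enn2real (SUP j. \<integral>\<^sup>+ \<omega>. ennreal (dist (Y j \<omega>) x0 powr p) \<partial>M)"
  have SY: "(SUP j. \<integral>\<^sup>+ \<omega>. ennreal (dist (Y j \<omega>) x0 powr p) \<partial>M) = ennreal SY" "SY \<ge> 0"
    using mom unfolding SY_def by (auto simp: ennreal_enn2real less_top)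
  define DY where "DY = 3 powr (p-1) * (dist x x0 powr p + SY)"
  have DY0: "DY \<ge> 0" unfolding DY_def using SY(2) by simp
  have YM: "\<And>j. Y j \<in> borel_measurable M" using Ym toM by blast
  have momY: "(\<integral>\<^sup>+\<omega>. dp x (Y j \<omega>) \<partial>M) \<le> ennreal DY" for j
  proof -
    have "(\<integral>\<^sup>+\<omega>. dp ((\<lambda>_. x) \<omega>) (Y j \<omega>) \<partial>M) \<le> ennreal (3 powr (p-1)) *
       ((\<integral>\<^sup>+\<omega>. dp ((\<lambda>_. x) \<omega>) ((\<lambda>_. x0) \<omega>) \<partial>M) + (\<integral>\<^sup>+\<omega>. dp ((\<lambda>_. x0) \<omega>) (Y j \<omega>) \<partial>M) + (\<integral>\<^sup>+\<omega>. dp (Y j \<omega>) (Y j \<omega>) \<partial>M))"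
      by (rule tri_int) (simp_all add: YM)
    also have "\<dots> \<le> ennreal (3 powr (p-1)) * (ennreal (dist x x0 powr p) + ennreal SY + 0)"
    proof (intro mult_left_mono add_mono)
      show "(\<integral>\<^sup>+\<omega>. dp ((\<lambda>_. x) \<omega>) ((\<lambda>_. x0) \<omega>) \<partial>M) \<le> ennreal (dist x x0 powr p)"
        using prob_space.emeasure_space_1[OF M] by simp
      have "(\<integral>\<^sup>+\<omega>. dp ((\<lambda>_. x0) \<omega>) (Y j \<omega>) \<partial>M) = (\<integral>\<^sup>+ \<omega>. ennreal (dist (Y j \<omega>) x0 powr p) \<partial>M)"
        by (simp add: dist_commute)
      also have "\<dots> \<le> (SUP j. \<integral>\<^sup>+ \<omega>. ennreal (dist (Y j \<omega>) x0 powr p) \<partial>M)" by (rule SUP_upper) simp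
      also have "\<dots> = ennreal SY" by (rule SY(1))
      finally show "(\<integral>\<^sup>+\<omega>. dp ((\<lambda>_. x0) \<omega>) (Y j \<omega>) \<partial>M) \<le> ennreal SY" .
      show "(\<integral>\<^sup>+\<omega>. dp (Y j \<omega>) (Y j \<omega>) \<partial>M) \<le> 0" using p by simp
    qed simp
    also have "\<dots> = ennreal DY" unfolding DY_def using SY(2) by (simp add: ennreal_mult)
    finally show ?thesis by simp
  qed
  have recAll: "AE \<omega> in M. \<forall>t. Y t \<omega> = F (Y (t - 1) \<omega>) (\<zeta> t \<omega>)"
    using rec by (simp add: AE_all_countable)
  have iterY: "AE \<omega> in M. \<forall>r n. Y (r + int n - 1) \<omega> = \<Phi> r n \<omega> (Y (r - 1) \<omega>)"
    using recAll
  proof eventually_elim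
    case (elim \<omega>)
    show ?case by (intro allI iter_rec elim)
  qed
  have bnd: "(\<integral>\<^sup>+\<omega>. dp (aseq x t s \<omega>) (Y t \<omega>) \<partial>M) \<le> ennreal (Bc * DY * \<rho>^s)" for s
  proof -
    define r where "r = t - int s"
    have U: "(\<lambda>_. x) \<in> Fl (r - 1) \<rightarrow>\<^sub>M borel" by simp
    have V: "Y (r - 1) \<in> Fl (r - 1) \<rightarrow>\<^sub>M borel" using Ym by simp
    have "(\<integral>\<^sup>+\<omega>. dp (aseq x t s \<omega>) (Y t \<omega>) \<partial>M)
        = (\<integral>\<^sup>+\<omega>. dp (\<Phi> r (Suc s) \<omega> ((\<lambda>_. x) \<omega>)) (\<Phi> r (Suc s) \<omega> (Y (r - 1) \<omega>)) \<partial>M)"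
    proof (rule nn_integral_cong_AE)
      show "AE \<omega> in M. dp (aseq x t s \<omega>) (Y t \<omega>) = dp (\<Phi> r (Suc s) \<omega> ((\<lambda>_. x) \<omega>)) (\<Phi> r (Suc s) \<omega> (Y (r - 1) \<omega>))"
        using iterY
      proof eventually_elim
        case (elim \<omega>)
        have "Y t \<omega> = \<Phi> r (Suc s) \<omega> (Y (r - 1) \<omega>)"
        proof -
          have e2: "r + int (Suc s) - 1 = t" by (simp add: r_def)
          show ?thesis using elim[rule_format, of r "Suc s"] unfolding e2 .
        qed
        then show ?case by (simp add: aseq_def r_def)
      qed
    qed
    also have "\<dots> \<le> ennreal (Bc * \<rho> ^ Suc s) * (\<integral>\<^sup>+\<omega>. dp ((\<lambda>_. x) \<omega>) (Y (r - 1) \<omega>) \<partial>M)"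
      by (rule iter_all[OF U V])
    also have "\<dots> \<le> ennreal (Bc * \<rho> ^ Suc s) * ennreal DY" by (intro mult_left_mono) (simp_all add: momY)
    also have "\<dots> \<le> ennreal (Bc * DY * \<rho>^s)"
    proof -
      have "Bc * DY * (\<rho> * \<rho>^s) \<le> Bc * DY * (1 * \<rho>^s)"
        using \<rho>_facts DY0 by (intro mult_left_mono mult_right_mono) auto
      then have "Bc * \<rho> ^ Suc s * DY \<le> Bc * DY * \<rho>^s" by (simp add: mult_ac)
      then have "ennreal (Bc * \<rho> ^ Suc s * DY) \<le> ennreal (Bc * DY * \<rho>^s)" by (rule ennreal_leI)
      then show ?thesis using \<rho>_facts DY0 by (simp add: ennreal_mult)
    qed
    finally show ?thesis .
  qed
  have "AE \<omega> in M. (\<lambda>s. dist (aseq x t s \<omega>) (Y t \<omega>)) \<longlonglongrightarrow> 0"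
    by (rule ae_dist_to_0[where b="\<lambda>s. Y t", OF aseq_meas YM _ \<rho>_facts(1,2) _ bnd])
       (use p \<rho>_facts(3) DY0 in auto)
  with aseq_conv[of x t] show ?thesis
  proof eventually_elim
    case (elim \<omega>)
    have "(\<lambda>s. aseq x t s \<omega>) \<longlonglongrightarrow> Y t \<omega>" by (subst tendsto_dist_iff) (rule elim(2))
    then show ?case using elim(1) by (rule LIMSEQ_unique)
  qed
qed

end

theorem theorem2:
  fixes M :: "'w measure"
    and Fl :: "int \<Rightarrow> 'w measure"
    and F :: "'a::polish_space \<Rightarrow> 'b::polish_space \<Rightarrow> 'a"
    and \<zeta> :: "int \<Rightarrow> 'w \<Rightarrow> 'b"
    and p L \<kappa> :: real and m :: nat and x0 :: 'a
  assumes M: "prob_space M"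
    and filt_sub: "\<And>t. subalgebra M (Fl t)"
    and filt_mono: "\<And>s t. s \<le> t \<Longrightarrow> sets (Fl s) \<subseteq> sets (Fl t)"
    and F_meas: "(\<lambda>(x, z). F x z) \<in> (borel \<Otimes>\<^sub>M borel) \<rightarrow>\<^sub>M borel"
    and adapted: "\<And>t. \<zeta> t \<in> Fl t \<rightarrow>\<^sub>M borel"
    and p: "p \<ge> 1" and L: "L > 0" and \<kappa>: "0 < \<kappa>" "\<kappa> < 1" and m: "m \<ge> 1"
    and A1: "(SUP t. \<integral>\<^sup>+ \<omega>. ennreal (dist (F x0 (\<zeta> t \<omega>)) x0 powr p) \<partial>M) < \<infinity>"
    and A2: "\<And>t. \<exists>K. reg_cond_distr M (Fl (t - 1)) (PiM {..<m} (\<lambda>_. borel))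
                  (\<lambda>\<omega>. \<lambda>i\<in>{..<m}. \<zeta> (t + int i) \<omega>) K \<and>
               (AE \<omega> in M. \<forall>x y.
                  (\<integral>\<^sup>+ z. ennreal (dist (F x (z 0)) (F y (z 0)) powr p) \<partial>K \<omega>)
                     \<le> ennreal (L powr p * dist x y powr p) \<and>
                  (\<integral>\<^sup>+ z. ennreal (dist (fiter F z m x) (fiter F z m y) powr p) \<partial>K \<omega>)
                     \<le> ennreal (\<kappa> powr p * dist x y powr p))"
  shows "\<exists>X :: 'a \<Rightarrow> int \<Rightarrow> 'w \<Rightarrow> 'a.
    (\<forall>x t. X x t \<in> M \<rightarrow>\<^sub>M borel) \<and>
    (\<forall>x. (SUP t. \<integral>\<^sup>+ \<omega>. ennreal (dist (X x t \<omega>) x0 powr p) \<partial>M) < \<infinity>) \<and>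
    (\<forall>x. \<exists>C>0. \<forall>\<^sub>F s in sequentially.
        (SUP t. \<integral>\<^sup>+ \<omega>. ennreal (dist (fiter F (\<lambda>i. \<zeta> (t - int s + int i) \<omega>) (Suc s) x) (X x t \<omega>) powr p) \<partial>M)
          \<le> ennreal ((C * \<kappa> powr (real s / real m)) powr p)) \<and>
    (\<forall>x t. AE \<omega> in M. (\<lambda>s. fiter F (\<lambda>i. \<zeta> (t - int s + int i) \<omega>) (Suc s) x) \<longlonglongrightarrow> X x t \<omega>) \<and>
    (\<forall>x y t. AE \<omega> in M. X x t \<omega> = X y t \<omega>) \<and>
    (\<forall>x. stationary M \<zeta> \<longrightarrow> stationary M (\<lambda>t \<omega>. (X x t \<omega>, \<zeta> t \<omega>))) \<and>
    (\<forall>x. stationary M \<zeta> \<and> ergodic M \<zeta> \<longrightarrow> ergodic M (\<lambda>t \<omega>. (X x t \<omega>, \<zeta> t \<omega>))) \<and>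
    (\<forall>x Y. (\<forall>t. Y t \<in> Fl t \<rightarrow>\<^sub>M borel) \<and>
           (\<forall>t. AE \<omega> in M. Y t \<omega> = F (Y (t - 1) \<omega>) (\<zeta> t \<omega>)) \<and>
           (SUP j. \<integral>\<^sup>+ \<omega>. ennreal (dist (Y j \<omega>) x0 powr p) \<partial>M) < \<infinity>
         \<longrightarrow> (\<forall>t. AE \<omega> in M. Y t \<omega> = X x t \<omega>))"
proof -
  interpret T: th2 M Fl F \<zeta> p L \<kappa> m x0
    by (rule th2.intro; fact)
  show ?thesis
  proof (rule exI[of _ T.Xf], intro conjI)
    show "\<forall>x t. T.Xf x t \<in> M \<rightarrow>\<^sub>M borel" by (intro allI) (rule T.Xf_meas)
    show "\<forall>x. (SUP t. \<integral>\<^sup>+ \<omega>. ennreal (dist (T.Xf x t \<omega>) x0 powr p) \<partial>M) < \<infinity>"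
    proof
      fix x
      have "(SUP t. \<integral>\<^sup>+ \<omega>. ennreal (dist (T.Xf x t \<omega>) x0 powr p) \<partial>M) \<le> ennreal (T.Kx x)"
        by (rule SUP_least) (rule T.Xf_moment)
      then show "(SUP t. \<integral>\<^sup>+ \<omega>. ennreal (dist (T.Xf x t \<omega>) x0 powr p) \<partial>M) < \<infinity>"
        by (rule le_less_trans) simp
    qed
    show "\<forall>x. \<exists>C>0. \<forall>\<^sub>F s in sequentially.
        (SUP t. \<integral>\<^sup>+ \<omega>. ennreal (dist (fiter F (\<lambda>i. \<zeta> (t - int s + int i) \<omega>) (Suc s) x) (T.Xf x t \<omega>) powr p) \<partial>M)
          \<le> ennreal ((C * \<kappa> powr (real s / real m)) powr p)"
    proof
      fix x
      define Q where "Q = Cr T.\<rho> p * (T.Bc * T.Dx x)"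
      have Q0: "Q \<ge> 0" unfolding Q_def
        using sig_tau_facts(5)[OF p T.\<rho>_facts(1,2)] T.\<rho>_facts(3) T.Dx_nonneg[of x] by simp
      define C where "C = (Q + 1) powr (1/p)"
      have C0: "C > 0" unfolding C_def using Q0 by simp
      have key: "(C * \<kappa> powr (real s / real m)) powr p = (Q + 1) * T.\<rho> ^ s" for s
      proof -
        have "(C * \<kappa> powr (real s / real m)) powr p = C powr p * (\<kappa> powr (real s / real m)) powr p"
          using C0 \<kappa> by (simp add: powr_mult)
        also have "C powr p = Q + 1" unfolding C_def using Q0 p by (simp add: powr_powr)
        also have "(\<kappa> powr (real s / real m)) powr p = \<kappa> powr (real s * (p / real m))"
          by (simp add: powr_powr)
        also have "\<dots> = T.\<rho> ^ s" unfolding T.\<rho>_def using \<kappa> by (simp add: powr_power)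
        finally show ?thesis .
      qed
      show "\<exists>C>0. \<forall>\<^sub>F s in sequentially.
        (SUP t. \<integral>\<^sup>+ \<omega>. ennreal (dist (fiter F (\<lambda>i. \<zeta> (t - int s + int i) \<omega>) (Suc s) x) (T.Xf x t \<omega>) powr p) \<partial>M)
          \<le> ennreal ((C * \<kappa> powr (real s / real m)) powr p)"
      proof (intro exI[of _ C] conjI C0 always_eventually allI)
        fix s
        show "(SUP t. \<integral>\<^sup>+ \<omega>. ennreal (dist (fiter F (\<lambda>i. \<zeta> (t - int s + int i) \<omega>) (Suc s) x) (T.Xf x t \<omega>) powr p) \<partial>M)
          \<le> ennreal ((C * \<kappa> powr (real s / real m)) powr p)"
        proof (rule SUP_least)
          fix t
          have "(\<integral>\<^sup>+ \<omega>. ennreal (dist (fiter F (\<lambda>i. \<zeta> (t - int s + int i) \<omega>) (Suc s) x) (T.Xf x t \<omega>) powr p) \<partial>M)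
              \<le> ennreal (Q * T.\<rho>^s)"
            using T.aseq_rate[of x t s] unfolding T.aseq_def T.\<Phi>_def Q_def .
          also have "\<dots> \<le> ennreal ((C * \<kappa> powr (real s / real m)) powr p)"
            unfolding key using T.\<rho>_facts by (intro ennreal_leI mult_right_mono) auto
          finally show "(\<integral>\<^sup>+ \<omega>. ennreal (dist (fiter F (\<lambda>i. \<zeta> (t - int s + int i) \<omega>) (Suc s) x) (T.Xf x t \<omega>) powr p) \<partial>M)
              \<le> ennreal ((C * \<kappa> powr (real s / real m)) powr p)" .
        qed
      qed
    qed
    show "\<forall>x t. AE \<omega> in M. (\<lambda>s. fiter F (\<lambda>i. \<zeta> (t - int s + int i) \<omega>) (Suc s) x) \<longlonglongrightarrow> T.Xf x t \<omega>"
    proof (intro allI)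
      fix x t
      show "AE \<omega> in M. (\<lambda>s. fiter F (\<lambda>i. \<zeta> (t - int s + int i) \<omega>) (Suc s) x) \<longlonglongrightarrow> T.Xf x t \<omega>"
        using T.aseq_conv[of x t] unfolding T.aseq_def T.\<Phi>_def .
    qed
    show "\<forall>x y t. AE \<omega> in M. T.Xf x t \<omega> = T.Xf y t \<omega>" by (intro allI) (rule T.part2)
    show "\<forall>x. stationary M \<zeta> \<longrightarrow> stationary M (\<lambda>t \<omega>. (T.Xf x t \<omega>, \<zeta> t \<omega>))"
      unfolding T.Xf_def by (intro allI impI) (rule stat_erg(1)[OF T.\<zeta>M T.gx_meas], assumption)
    show "\<forall>x. stationary M \<zeta> \<and> ergodic M \<zeta> \<longrightarrow> ergodic M (\<lambda>t \<omega>. (T.Xf x t \<omega>, \<zeta> t \<omega>))"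
      unfolding T.Xf_def by (intro allI impI) (rule stat_erg(2)[OF T.\<zeta>M T.gx_meas], erule conjunct2)
    show "\<forall>x Y. (\<forall>t. Y t \<in> Fl t \<rightarrow>\<^sub>M borel) \<and>
           (\<forall>t. AE \<omega> in M. Y t \<omega> = F (Y (t - 1) \<omega>) (\<zeta> t \<omega>)) \<and>
           (SUP j. \<integral>\<^sup>+ \<omega>. ennreal (dist (Y j \<omega>) x0 powr p) \<partial>M) < \<infinity>
         \<longrightarrow> (\<forall>t. AE \<omega> in M. Y t \<omega> = T.Xf x t \<omega>)"
      by (intro allI impI, elim conjE, rule T.part4)
  qed
qed

end
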